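(* Let $\Lambda=\sum_{i=0}^{N-1}a_i\Lambda_i\in P_N^+(L)$ with $\sum_{i=1}^{N-1}i\,a_i\equiv M\pmod N$, and let $k_1>k_2>\cdots$ be the sequence with $\psi_\Lambda=u_{k_1}\wedge u_{k_2}\wedge\cdots$. Then for all indices $l>m$ there are coefficients $c_{\alpha,k_{l'}}\in\mathbb K$ such that in $\wedge^2V_{\mathrm{aff}}$ $$u_{k_l}\wedge u_{k_m}=\sum_{l'}c_{\alpha,k_{l'}}\,u_\alpha\wedge u_{k_{l'}},$$ where in every term $\alpha>k_{l'}\ge k_l$ (i.e. the second momentum in every term is again a member $k_{l'}$ of the sequence, with $k_{l'}\ge k_l$).
   Context: Let $N,L\ge 2$ be integers, $q$ an indeterminate and $\mathbb K=\mathbb Q(q^{1/(2N)})$. Let $\mathbb K^L$ have basis $\mathfrak e_1,\dots,\mathfrak e_L$, $\mathbb K^N$ have basis $\mathfrak v_1,\dots,\mathfrak v_N$, and $V_{\mathrm{aff}}=\mathbb K[z^{\pm1}]\otimes\mathbb K^L\otimes\mathbb K^N$. Identify $V_{\mathrm{aff}}^{\otimes n}=\mathbb K[z_1^{\pm1},\dots,z_n^{\pm1}]\otimes(\mathbb K^L)^{\otimes n}\otimes(\mathbb K^N)^{\otimes n}$. With $E_{a,b}$ the matrix units of $\mathbb K^L$ put $R(z_1,z_2)=(q^2z_1-z_2)\sum_{a}E_{a,a}\otimes E_{a,a}+q(z_1-z_2)\sum_{a\neq b}E_{a,a}\otimes E_{b,b}+z_1(q^2-1)\sum_{a<b}E_{a,b}\otimes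 E_{b,a}+z_2(q^2-1)\sum_{a>b}E_{a,b}\otimes E_{b,a}$, $s$ the exchange of the two factors of $(\mathbb K[z^{\pm1}]\otimes\mathbb K^L)^{\otimes 2}$, $\overset{c}{T}=\frac{z_1-q^2z_2}{z_1-z_2}\bigl(1-s\cdot\frac{R(z_1,z_2)}{q^2z_1-z_2}\bigr)-1$, and $\overset{s}{T}$ on $(\mathbb K^N)^{\otimes 2}$: $\mathfrak v_{\epsilon_1}\otimes\mathfrak v_{\epsilon_2}\mapsto q^2\mathfrak v_{\epsilon_1}\otimes\mathfrak v_{\epsilon_2}$ if $\epsilon_1=\epsilon_2$, $q\,\mathfrak v_{\epsilon_2}\otimes\mathfrak v_{\epsilon_1}$ if $\epsilon_1<\epsilon_2$, $q\,\mathfrak v_{\epsilon_2}\otimes\mathfrak v_{\epsilon_1}+(q^2-1)\mathfrak v_{\epsilon_1}\otimes\mathfrak v_{\epsilon_2}$ if $\epsilon_1>\epsilon_2$; $\overset{c}{T}_i,\overset{s}{T}_i$ act in factors $i,i+1$. $\wedge^nV_{\mathrm{aff}}=V_{\mathrm{aff}}^{\otimes n}/\sum_{i}\mathrm{Im}(\overset{c}{T}_i-\overset{s}{T}_i)$. Write $k=\bar k-N(\dot k+L\underline k)$ ($\bar k\in\{1..N\}$, $\dot k\in\{1..L\}$, $\underline k\in\mathbb Z$), $u_k=z^{\underline k}\mathfrak e_{\dot k}\mathfrak v_{\bar k}$; $u_{k_1}\wedge\cdots\wedge u_{k_n}$ is the image of $u_{k_1}\otimes\cdots\otimes u_{k_n}$.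 The Fock space $\mathcal F_M$ is the inductive limit of $\wedge^nV_{\mathrm{aff}}$ along $v\mapsto v\wedge u_{M-n}$, with vacuum $|M\rangle=u_M\wedge u_{M-1}\wedge\cdots$. Weights: $\Lambda_0,\dots,\Lambda_{N-1}$ are the fundamental weights of $\widehat{\mathfrak{sl}}_N$; $P_N^+(L)=\{\sum_{i=0}^{N-1}a_i\Lambda_i: a_i\in\mathbb Z_{\ge0},\sum a_i=L\}$. The vector $\psi_\Lambda$: let $s\in\{0,\dots,NL-1\}$ with $M\equiv s\pmod{NL}$, and let $l_1\ge l_2\ge\cdots\ge l_N$ be the integers with $l_i-l_{i+1}=a_i$ ($1\le i<N$) and $l_1+\cdots+l_N=s+NL$ (then $l_N>0$). Consider the Young diagram with column $x$ ($1\le x\le N$) consisting of boxes $(x,y)$, $1\le y\le l_x$. Number its $s+NL$ boxes $1,\dots,s+NL$ so that rows are numbered from the top row downwards (every box of a lower row gets a larger number than every box of a higher row) and within a row numbers increase from right to left. If box number $i$ is $(x_i,y_i)$, put $k_i=x_i+N(y_i-L-1)+M-s$; then $k_1>\cdots>k_{s+NL}$, and $\psi_\Lambda=u_{k_1}\wedge\cdots\wedge u_{k_{s+NL}}\wedge|M-s-NL\rangle\in\mathcal F_M$; set $k_i=M-i+1$ for $i>s+NL$. *)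

theory Defs
  imports "HOL-Computational_Algebra.Polynomial" "HOL-Computational_Algebra.Fraction_Field"
begin

(* The field K = Q(q^(1/(2N))) is modelled as Q(t) = rat poly fract, t = q^(1/(2N)),
   so q = t^(2N). *)
type_synonym K = "rat poly fract"

definition tvar :: K where "tvar = Fract [:0, 1:] 1"
definition qq :: "nat \<Rightarrow> K" where "qq N = tvar ^ (2 * N)"

(* Decomposition k = bar k - N (dot k + L * under k), bar in {1..N}, dot in {1..L} *)
definition kbar :: "nat \<Rightarrow> int \<Rightarrow> int" where
  "kbar N k = (k - 1) mod int N + 1"
definition kt :: "nat \<Rightarrow> int \<Rightarrow> int" where
  "kt N k = (kbar N k - k) div int N"
definition kdot :: "nat \<Rightarrow> nat \<Rightarrow> int \<Rightarrow> int" where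
  "kdot N L k = (kt N k - 1) mod int L + 1"
definition kunder :: "nat \<Rightarrow> nat \<Rightarrow> int \<Rightarrow> int" where
  "kunder N L k = (kt N k - kdot N L k) div int L"
definition mkk :: "nat \<Rightarrow> nat \<Rightarrow> int \<Rightarrow> int \<Rightarrow> int \<Rightarrow> int" where
  "mkk N L b d u = b - int N * (d + int L * u)"

(* Elements of V_aff^{(x)2}: coefficient functions w.r.t. the basis
   u_{k1} (x) u_{k2}, (k1,k2) in Z^2, with finite support. *)
type_synonym vec = "int \<times> int \<Rightarrow> K"

definition fsupp :: "vec \<Rightarrow> bool" where "fsupp f \<longleftrightarrow> finite {p. f p \<noteq> 0}"
definition bv :: "int \<times> int \<Rightarrow> vec" where "bv p = (\<lambda>x. if x = p then 1 else 0)"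
definition vadd :: "vec \<Rightarrow> vec \<Rightarrow> vec" where "vadd f g = (\<lambda>x. f x + g x)"
definition vsub :: "vec \<Rightarrow> vec \<Rightarrow> vec" where "vsub f g = (\<lambda>x. f x - g x)"
definition vsc :: "K \<Rightarrow> vec \<Rightarrow> vec" where "vsc c f = (\<lambda>x. c * f x)"

definition lin :: "(int \<times> int \<Rightarrow> vec) \<Rightarrow> vec \<Rightarrow> vec" where
  "lin F f = (\<lambda>x. \<Sum>p\<in>{p. f p \<noteq> 0}. f p * F p x)"

(* multiplication by z1, z2 : raising the z-exponent by one lowers k by N L *)
definition z1b :: "nat \<Rightarrow> nat \<Rightarrow> int \<times> int \<Rightarrow> vec" where
  "z1b N L p = bv (fst p - int N * int L, snd p)"
definition z2b :: "nat \<Rightarrow> nat \<Rightarrow> int \<times> int \<Rightarrow> vec" where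
  "z2b N L p = bv (fst p, snd p - int N * int L)"
definition Z1 :: "nat \<Rightarrow> nat \<Rightarrow> vec \<Rightarrow> vec" where "Z1 N L = lin (z1b N L)"
definition Z2 :: "nat \<Rightarrow> nat \<Rightarrow> vec \<Rightarrow> vec" where "Z2 N L = lin (z2b N L)"

(* exchange of the e-parts only (used to describe R) *)
definition swapdot :: "nat \<Rightarrow> nat \<Rightarrow> int \<times> int \<Rightarrow> int \<times> int" where
  "swapdot N L p = (mkk N L (kbar N (fst p)) (kdot N L (snd p)) (kunder N L (fst p)),
                    mkk N L (kbar N (snd p)) (kdot N L (fst p)) (kunder N L (snd p)))"
(* s: exchange of the (z,e)-parts of the two factors (v-parts stay) *)
definition swapZE :: "nat \<Rightarrow> nat \<Rightarrow> int \<times> int \<Rightarrow> int \<times> int" where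
  "swapZE N L p = (mkk N L (kbar N (fst p)) (kdot N L (snd p)) (kunder N L (snd p)),
                   mkk N L (kbar N (snd p)) (kdot N L (fst p)) (kunder N L (fst p)))"
(* exchange of the v-parts (used for sT) *)
definition swapbar :: "nat \<Rightarrow> nat \<Rightarrow> int \<times> int \<Rightarrow> int \<times> int" where
  "swapbar N L p = (mkk N L (kbar N (snd p)) (kdot N L (fst p)) (kunder N L (fst p)),
                    mkk N L (kbar N (fst p)) (kdot N L (snd p)) (kunder N L (snd p)))"

(* R(z1,z2) on basis vectors z1^m1 z2^m2 e_a(x)e_b (x) v(x)v *)
definition Rb :: "nat \<Rightarrow> nat \<Rightarrow> int \<times> int \<Rightarrow> vec" where
  "Rb N L p = (let a = kdot N L (fst p); b = kdot N L (snd p); q = qq N in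
     if a = b then vsub (vsc (q^2) (z1b N L p)) (z2b N L p)
     else vadd (vsc q (vsub (z1b N L p) (z2b N L p)))
               (vsc (q^2 - 1) (if a > b then z1b N L (swapdot N L p) else z2b N L (swapdot N L p))))"
definition RR :: "nat \<Rightarrow> nat \<Rightarrow> vec \<Rightarrow> vec" where "RR N L = lin (Rb N L)"
definition SS :: "nat \<Rightarrow> nat \<Rightarrow> vec \<Rightarrow> vec" where "SS N L = lin (\<lambda>p. bv (swapZE N L p))"

(* cT f = g  iff  g + f = (z1-q^2 z2)/(z1-z2) (f - s(R f / (q^2 z1 - z2))),
   i.e. (s is the variable exchange, so s(q^2 z1 - z2) = q^2 z2 - z1), after clearing
   denominators:
   (z1-z2)(q^2 z2 - z1)(g+f) = (z1 - q^2 z2)((q^2 z2 - z1) f - s(R f)). *)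
definition cT :: "nat \<Rightarrow> nat \<Rightarrow> vec \<Rightarrow> vec" where
  "cT N L f = (THE g. fsupp g \<and>
     (let q = qq N;
          mD1 = (\<lambda>h. vsub (Z1 N L h) (Z2 N L h));
          msD2 = (\<lambda>h. vsub (vsc (q^2) (Z2 N L h)) (Z1 N L h));
          mP = (\<lambda>h. vsub (Z1 N L h) (vsc (q^2) (Z2 N L h)))
      in mD1 (msD2 (vadd g f)) = mP (vsub (msD2 f) (SS N L (RR N L f)))))"

(* sT on the (K^N)^{(x)2} part *)
definition sTb :: "nat \<Rightarrow> nat \<Rightarrow> int \<times> int \<Rightarrow> vec" where
  "sTb N L p = (let e1 = kbar N (fst p); e2 = kbar N (snd p); q = qq N in
     if e1 = e2 then vsc (q^2) (bv p)
     else if e1 < e2 then vsc q (bv (swapbar N L p))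
     else vadd (vsc q (bv (swapbar N L p))) (vsc (q^2 - 1) (bv p)))"
definition sT :: "nat \<Rightarrow> nat \<Rightarrow> vec \<Rightarrow> vec" where "sT N L = lin (sTb N L)"

(* the relation subspace Im(cT - sT) in V_aff^{(x)2}; wedge^2 V_aff is the quotient *)
definition relIm :: "nat \<Rightarrow> nat \<Rightarrow> vec set" where
  "relIm N L = {vsub (cT N L g) (sT N L g) | g. fsupp g}"

definition sres :: "nat \<Rightarrow> nat \<Rightarrow> int \<Rightarrow> int" where "sres N L M = M mod (int N * int L)"
definition lN :: "nat \<Rightarrow> nat \<Rightarrow> int \<Rightarrow> (nat \<Rightarrow> nat) \<Rightarrow> int" where
  "lN N L M a = (sres N L M + int N * int L - (\<Sum>j=1..<N. int (j * a j))) div int N"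
definition lcol :: "nat \<Rightarrow> nat \<Rightarrow> int \<Rightarrow> (nat \<Rightarrow> nat) \<Rightarrow> int \<Rightarrow> int" where
  "lcol N L M a x = lN N L M a + (\<Sum>j\<in>{nat x..<N}. int (a j))"
definition boxes :: "nat \<Rightarrow> nat \<Rightarrow> int \<Rightarrow> (nat \<Rightarrow> nat) \<Rightarrow> (int \<times> int) set" where
  "boxes N L M a = {(x, y). 1 \<le> x \<and> x \<le> int N \<and> 1 \<le> y \<and> y \<le> lcol N L M a x}"
definition boxnum :: "nat \<Rightarrow> nat \<Rightarrow> int \<Rightarrow> (nat \<Rightarrow> nat) \<Rightarrow> int \<times> int \<Rightarrow> nat" where
  "boxnum N L M a b = card {b' \<in> boxes N L M a. snd b' > snd b}
                    + card {b' \<in> boxes N L M a. snd b' = snd b \<and> fst b' > fst b} + 1"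
definition kseq :: "nat \<Rightarrow> nat \<Rightarrow> int \<Rightarrow> (nat \<Rightarrow> nat) \<Rightarrow> nat \<Rightarrow> int" where
  "kseq N L M a i = (if int i \<le> sres N L M + int N * int L
     then (let b = (THE b. b \<in> boxes N L M a \<and> boxnum N L M a b = i)
           in fst b + int N * (snd b - int L - 1) + M - sres N L M)
     else M - int i + 1)"

end

theory Submission
  imports Defs
begin



section \<open>Field facts\<close>

lemma tvar_pos: "tvar > 0"
  unfolding tvar_def by (simp add: zero_less_Fract_iff less_poly_def pos_poly_def)
lemma qq_pos: "qq N > 0" unfolding qq_def using tvar_pos by simp
lemma qq_nz: "qq N \<noteq> 0" using qq_pos[of N] by simp
lemma qq2_nz: "qq N ^ 2 \<noteq> 0" using qq_nz by simp
lemma one_qq2_nz: "1 + qq N ^ 2 \<noteq> 0"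
proof -
  have "qq N ^ 2 \<ge> 0" by simp
  then show ?thesis by (metis add_nonneg_eq_0_iff one_neq_zero zero_le_one)
qed

section \<open>Index arithmetic\<close>

definition kk :: "nat \<Rightarrow> int \<Rightarrow> int \<Rightarrow> int" where "kk N b J = b - int N * J"

lemma kbar_kk: "1 \<le> b \<Longrightarrow> b \<le> int N \<Longrightarrow> kbar N (kk N b J) = b"
proof -
  assume h: "1 \<le> b" "b \<le> int N"
  have "(b - int N * J - 1) mod int N = (b - 1) mod int N"
    by (metis add.commute diff_add_eq mod_mult_self3 mult.commute diff_conv_add_uminus mult_minus_left)
  also have "\<dots> = b - 1" using h by (simp add: mod_pos_pos_trivial)
  finally show ?thesis unfolding kbar_def kk_def by simp
qed

lemma kt_kk: "1 \<le> b \<Longrightarrow> b \<le> int N \<Longrightarrow> kt N (kk N b J) = J"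
proof -
  assume h: "1 \<le> b" "b \<le> int N"
  then have "N > 0" by simp
  have "kbar N (kk N b J) - kk N b J = int N * J" using kbar_kk[OF h] unfolding kk_def by simp
  then show ?thesis unfolding kt_def using \<open>N > 0\<close> by simp
qed

lemma kbar_range: "N > 0 \<Longrightarrow> 1 \<le> kbar N k \<and> kbar N k \<le> int N"
  unfolding kbar_def by (simp add: pos_mod_bound pos_mod_sign add1_zle_eq)

lemma kk_decomp: "N > 0 \<Longrightarrow> kk N (kbar N k) (kt N k) = k"
proof -
  assume "N > 0"
  have "int N dvd (kbar N k - k)"
  proof -
    have "kbar N k - k = - (int N * ((k - 1) div int N))"
      unfolding kbar_def using minus_mod_eq_mult_div[of "k - 1" "int N"] by simp
    then show ?thesis by simp
  qed
  then show ?thesis unfolding kk_def kt_def by (simp add: dvd_mult_div_cancel)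
qed

lemma kk_inj: "1 \<le> b \<Longrightarrow> b \<le> int N \<Longrightarrow> 1 \<le> b' \<Longrightarrow> b' \<le> int N \<Longrightarrow>
   kk N b J = kk N b' J' \<longleftrightarrow> b = b' \<and> J = J'"
  by (metis kbar_kk kt_kk)

definition dJ :: "nat \<Rightarrow> int \<Rightarrow> int" where "dJ L J = (J - 1) mod int L + 1"
definition uJ :: "nat \<Rightarrow> int \<Rightarrow> int" where "uJ L J = (J - dJ L J) div int L"

lemma dJ_range: "L > 0 \<Longrightarrow> 1 \<le> dJ L J \<and> dJ L J \<le> int L"
  unfolding dJ_def by (simp add: pos_mod_bound pos_mod_sign add1_zle_eq)

lemma J_decomp: "L > 0 \<Longrightarrow> J = dJ L J + int L * uJ L J"
proof -
  assume "L > 0"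
  have "int L dvd (J - dJ L J)"
  proof -
    have "J - dJ L J = int L * ((J - 1) div int L)"
      unfolding dJ_def using minus_mod_eq_mult_div[of "J - 1" "int L"] by simp
    then show ?thesis by simp
  qed
  then show ?thesis unfolding uJ_def by (simp add: dvd_mult_div_cancel)
qed

lemma dJ_eq: "1 \<le> d \<Longrightarrow> d \<le> int L \<Longrightarrow> dJ L (d + int L * u) = d"
proof -
  assume h: "1 \<le> d" "d \<le> int L"
  have "(d + int L * u - 1) mod int L = (d - 1) mod int L"
    by (metis add.commute add_diff_eq mod_mult_self2 mult.commute)
  also have "\<dots> = d - 1" using h by (simp add: mod_pos_pos_trivial)
  finally show ?thesis unfolding dJ_def by simp
qed

lemma uJ_eq: "1 \<le> d \<Longrightarrow> d \<le> int L \<Longrightarrow> uJ L (d + int L * u) = u"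
  unfolding uJ_def using dJ_eq[of d L u] by simp

lemma kdot_kk: "1 \<le> b \<Longrightarrow> b \<le> int N \<Longrightarrow> kdot N L (kk N b J) = dJ L J"
  unfolding kdot_def dJ_def using kt_kk by simp

lemma kunder_kk: "1 \<le> b \<Longrightarrow> b \<le> int N \<Longrightarrow> kunder N L (kk N b J) = uJ L J"
  unfolding kunder_def uJ_def using kt_kk kdot_kk unfolding dJ_def by simp

lemma mkk_kk: "mkk N L b d u = kk N b (d + int L * u)"
  unfolding mkk_def kk_def by simp

lemma kk_shift: "kk N b J - int N * int L = kk N b (J + int L)"
  unfolding kk_def by (simp add: algebra_simps)



definition supp :: "vec \<Rightarrow> (int \<times> int) set" where "supp f = {p. f p \<noteq> 0}"

lemma fsupp_iff: "fsupp f \<longleftrightarrow> finite (supp f)" unfolding fsupp_def supp_def by simp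

lemma fsupp_bv[simp]: "fsupp (bv p)"
proof -
  have "{x. bv p x \<noteq> 0} \<subseteq> {p}" unfolding bv_def by auto
  then show ?thesis unfolding fsupp_def using finite_subset by blast
qed

lemma fsupp_zero[simp]: "fsupp (\<lambda>x. 0)" unfolding fsupp_def by simp

lemma fsupp_vadd[simp]: "fsupp f \<Longrightarrow> fsupp g \<Longrightarrow> fsupp (vadd f g)"
proof -
  assume "fsupp f" "fsupp g"
  have "{x. vadd f g x \<noteq> 0} \<subseteq> {x. f x \<noteq> 0} \<union> {x. g x \<noteq> 0}" unfolding vadd_def by auto
  then show ?thesis using \<open>fsupp f\<close> \<open>fsupp g\<close> unfolding fsupp_def by (meson finite_UnI finite_subset)
qed

lemma fsupp_vsub[simp]: "fsupp f \<Longrightarrow> fsupp g \<Longrightarrow> fsupp (vsub f g)"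
proof -
  assume "fsupp f" "fsupp g"
  have "{x. vsub f g x \<noteq> 0} \<subseteq> {x. f x \<noteq> 0} \<union> {x. g x \<noteq> 0}" unfolding vsub_def by auto
  then show ?thesis using \<open>fsupp f\<close> \<open>fsupp g\<close> unfolding fsupp_def by (meson finite_UnI finite_subset)
qed

lemma fsupp_vsc[simp]: "fsupp f \<Longrightarrow> fsupp (vsc c f)"
proof -
  assume "fsupp f"
  have "{x. vsc c f x \<noteq> 0} \<subseteq> {x. f x \<noteq> 0}" unfolding vsc_def by auto
  then show ?thesis using \<open>fsupp f\<close> unfolding fsupp_def by (meson finite_subset)
qed

lemma fsupp_comp_inj: "fsupp f \<Longrightarrow> inj h \<Longrightarrow> fsupp (\<lambda>x. f (h x))"
proof -
  assume "fsupp f" "inj h"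
  have eq: "{x. f (h x) \<noteq> 0} = h -` {x. f x \<noteq> 0}" by auto
  show ?thesis unfolding fsupp_def eq
    by (rule finite_vimageI) (use \<open>fsupp f\<close> \<open>inj h\<close> in \<open>auto simp: fsupp_def\<close>)
qed

lemma lin_over: "finite S \<Longrightarrow> {p. f p \<noteq> 0} \<subseteq> S \<Longrightarrow> lin F f x = (\<Sum>p\<in>S. f p * F p x)"
  unfolding lin_def by (rule sum.mono_neutral_left) auto

lemma lin_vadd: "fsupp f \<Longrightarrow> fsupp g \<Longrightarrow> lin F (vadd f g) = vadd (lin F f) (lin F g)"
proof
  fix x assume f: "fsupp f" and g: "fsupp g"
  let ?S = "{p. f p \<noteq> 0} \<union> {p. g p \<noteq> 0}"
  have fin: "finite ?S" using f g unfolding fsupp_def by simp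
  have "lin F (vadd f g) x = (\<Sum>p\<in>?S. vadd f g p * F p x)"
    by (rule lin_over[OF fin]) (auto simp: vadd_def)
  also have "\<dots> = (\<Sum>p\<in>?S. f p * F p x) + (\<Sum>p\<in>?S. g p * F p x)"
    by (simp add: vadd_def distrib_right sum.distrib)
  also have "\<dots> = lin F f x + lin F g x"
    using lin_over[OF fin, of f F x] lin_over[OF fin, of g F x] by auto
  finally show "lin F (vadd f g) x = vadd (lin F f) (lin F g) x" unfolding vadd_def .
qed

lemma lin_vsub: "fsupp f \<Longrightarrow> fsupp g \<Longrightarrow> lin F (vsub f g) = vsub (lin F f) (lin F g)"
proof
  fix x assume f: "fsupp f" and g: "fsupp g"
  let ?S = "{p. f p \<noteq> 0} \<union> {p. g p \<noteq> 0}"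
  have fin: "finite ?S" using f g unfolding fsupp_def by simp
  have "lin F (vsub f g) x = (\<Sum>p\<in>?S. vsub f g p * F p x)"
    by (rule lin_over[OF fin]) (auto simp: vsub_def)
  also have "\<dots> = (\<Sum>p\<in>?S. f p * F p x) - (\<Sum>p\<in>?S. g p * F p x)"
    by (simp add: vsub_def left_diff_distrib sum_subtractf)
  also have "\<dots> = lin F f x - lin F g x"
    using lin_over[OF fin, of f F x] lin_over[OF fin, of g F x] by auto
  finally show "lin F (vsub f g) x = vsub (lin F f) (lin F g) x" unfolding vsub_def .
qed

lemma lin_vsc: "fsupp f \<Longrightarrow> lin F (vsc c f) = vsc c (lin F f)"
proof
  fix x assume f: "fsupp f"
  let ?S = "{p. f p \<noteq> 0}"
  have fin: "finite ?S" using f unfolding fsupp_def by simp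
  have "lin F (vsc c f) x = (\<Sum>p\<in>?S. vsc c f p * F p x)"
    by (rule lin_over[OF fin]) (auto simp: vsc_def)
  also have "\<dots> = c * (\<Sum>p\<in>?S. f p * F p x)"
    by (simp add: vsc_def sum_distrib_left mult.assoc)
  also have "\<dots> = c * lin F f x"
    using lin_over[OF fin, of f F x] by auto
  finally show "lin F (vsc c f) x = vsc c (lin F f) x" unfolding vsc_def .
qed

lemma lin_bv: "lin F (bv p) = F p"
proof
  fix x
  have "lin F (bv p) x = (\<Sum>p'\<in>{p}. bv p p' * F p' x)"
    by (rule lin_over) (auto simp: bv_def)
  then show "lin F (bv p) x = F p x" by (simp add: bv_def)
qed

lemma lin_zero: "lin F (\<lambda>x. 0) = (\<lambda>x. 0)"
  unfolding lin_def by simp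

lemma lin_bv_id: "fsupp c \<Longrightarrow> lin bv c = c"
proof
  fix x assume "fsupp c"
  have "lin bv c x = (\<Sum>p\<in>{p. c p \<noteq> 0}. (if x = p then c p else 0))"
    unfolding lin_def bv_def by (rule sum.cong) auto
  also have "\<dots> = c x" using \<open>fsupp c\<close> unfolding fsupp_def by auto
  finally show "lin bv c x = c x" .
qed

lemma fsupp_lin: "fsupp f \<Longrightarrow> (\<And>p. fsupp (F p)) \<Longrightarrow> fsupp (lin F f)"
proof -
  assume f: "fsupp f" and F: "\<And>p. fsupp (F p)"
  let ?S = "{p. f p \<noteq> 0}"
  have "{x. lin F f x \<noteq> 0} \<subseteq> (\<Union>p\<in>?S. {x. F p x \<noteq> 0})"
  proof
    fix x assume "x \<in> {x. lin F f x \<noteq> 0}"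
    then have "(\<Sum>p\<in>?S. f p * F p x) \<noteq> 0" unfolding lin_def by simp
    then obtain p where "p \<in> ?S" "f p * F p x \<noteq> 0" by (meson sum.neutral)
    then show "x \<in> (\<Union>p\<in>?S. {x. F p x \<noteq> 0})" by (intro UN_I[of p]) auto
  qed
  moreover have "finite (\<Union>p\<in>?S. {x. F p x \<noteq> 0})"
    using f F unfolding fsupp_def by auto
  ultimately show ?thesis unfolding fsupp_def by (rule finite_subset)
qed

lemma lin_bv_comp:
  assumes f: "fsupp f" and hinv: "\<And>p x. (x = h p) \<longleftrightarrow> (p = h' x)"
  shows "lin (\<lambda>p. bv (h p)) f = (\<lambda>x. f (h' x))"
proof
  fix x
  have "lin (\<lambda>p. bv (h p)) f x = (\<Sum>p\<in>{p. f p \<noteq> 0}. (if p = h' x then f p else 0))"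
    unfolding lin_def bv_def by (rule sum.cong) (auto simp: hinv)
  also have "\<dots> = f (h' x)" using f unfolding fsupp_def by auto
  finally show "lin (\<lambda>p. bv (h p)) f x = f (h' x)" .
qed

lemma Z1_eq: "fsupp f \<Longrightarrow> Z1 N L f = (\<lambda>x. f (fst x + int N * int L, snd x))"
  unfolding Z1_def z1b_def by (rule lin_bv_comp) auto

lemma Z2_eq: "fsupp f \<Longrightarrow> Z2 N L f = (\<lambda>x. f (fst x, snd x + int N * int L))"
  unfolding Z2_def z2b_def by (rule lin_bv_comp) auto

lemma swapZE_inv: "N > 0 \<Longrightarrow> L > 0 \<Longrightarrow> swapZE N L (swapZE N L p) = p"
proof -
  assume N: "N > 0" and L: "L > 0"
  obtain k1 k2 where p: "p = (k1, k2)" by (cases p)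
  define b1 where "b1 = kbar N k1"
  define b2 where "b2 = kbar N k2"
  define J1 where "J1 = kt N k1"
  define J2 where "J2 = kt N k2"
  have b1: "1 \<le> b1" "b1 \<le> int N" using kbar_range[OF N] b1_def by auto
  have b2: "1 \<le> b2" "b2 \<le> int N" using kbar_range[OF N] b2_def by auto
  have k1: "k1 = kk N b1 J1" using kk_decomp[OF N] b1_def J1_def by simp
  have k2: "k2 = kk N b2 J2" using kk_decomp[OF N] b2_def J2_def by simp
  have d1: "1 \<le> dJ L J1" "dJ L J1 \<le> int L" using dJ_range[OF L] by auto
  have d2: "1 \<le> dJ L J2" "dJ L J2 \<le> int L" using dJ_range[OF L] by auto
  have s1: "swapZE N L p = (kk N b1 J2, kk N b2 J1)"
    unfolding swapZE_def p k1 k2 using b1 b2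
    by (simp add: kbar_kk kdot_kk kunder_kk mkk_kk J_decomp[OF L, symmetric])
  show ?thesis
    unfolding s1 swapZE_def using b1 b2
    by (simp add: kbar_kk kdot_kk kunder_kk mkk_kk J_decomp[OF L, symmetric] p k1 k2)
qed

lemma SS_eq: "N > 0 \<Longrightarrow> L > 0 \<Longrightarrow> fsupp f \<Longrightarrow> SS N L f = (\<lambda>x. f (swapZE N L x))"
  unfolding SS_def by (rule lin_bv_comp) (auto simp: swapZE_inv)

lemma fsupp_Z1[simp]: "fsupp f \<Longrightarrow> fsupp (Z1 N L f)"
  using fsupp_comp_inj[of f "\<lambda>x. (fst x + int N * int L, snd x)"]
  by (simp add: Z1_eq inj_def prod_eq_iff)
lemma fsupp_Z2[simp]: "fsupp f \<Longrightarrow> fsupp (Z2 N L f)"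
  using fsupp_comp_inj[of f "\<lambda>x. (fst x, snd x + int N * int L)"]
  by (simp add: Z2_eq inj_def prod_eq_iff)
lemma fsupp_SS[simp]: "N > 0 \<Longrightarrow> L > 0 \<Longrightarrow> fsupp f \<Longrightarrow> fsupp (SS N L f)"
  apply (simp add: SS_eq)
  apply (rule fsupp_comp_inj, assumption)
  by (metis injI swapZE_inv)



definition pt :: "nat \<Rightarrow> int \<Rightarrow> int \<Rightarrow> int \<Rightarrow> int \<Rightarrow> int \<times> int" where
  "pt N b1 b2 Y1 Y2 = (kk N b1 Y1, kk N b2 Y2)"

lemma pt_eq_iff[simp]: "N > 0 \<Longrightarrow> pt N b1 b2 Y1 Y2 = pt N b1 b2 Y1' Y2' \<longleftrightarrow> Y1 = Y1' \<and> Y2 = Y2'"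
  unfolding pt_def kk_def by auto

lemma swapZE_pt:
  assumes N: "N > 0" and L: "L > 0" and b1: "1 \<le> b1" "b1 \<le> int N" and b2: "1 \<le> b2" "b2 \<le> int N"
  shows "swapZE N L (pt N b1 b2 Y1 Y2) = pt N b1 b2 Y2 Y1"
  unfolding swapZE_def pt_def using b1 b2
  by (simp add: kbar_kk kdot_kk kunder_kk mkk_kk J_decomp[OF L, symmetric])

lemma swapdot_pt:
  assumes N: "N > 0" and L: "L > 0" and b1: "1 \<le> b1" "b1 \<le> int N" and b2: "1 \<le> b2" "b2 \<le> int N"
  shows "swapdot N L (pt N b1 b2 Y1 Y2) =
     pt N b1 b2 (dJ L Y2 + int L * uJ L Y1) (dJ L Y1 + int L * uJ L Y2)"
  unfolding swapdot_def pt_def using b1 b2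
  by (simp add: kbar_kk kdot_kk kunder_kk mkk_kk)

lemma swapbar_pt:
  assumes N: "N > 0" and L: "L > 0" and b1: "1 \<le> b1" "b1 \<le> int N" and b2: "1 \<le> b2" "b2 \<le> int N"
  shows "swapbar N L (pt N b1 b2 Y1 Y2) = pt N b2 b1 Y1 Y2"
  unfolding swapbar_def pt_def using b1 b2
  by (simp add: kbar_kk kdot_kk kunder_kk mkk_kk J_decomp[OF L, symmetric])

lemma z1b_pt: "z1b N L (pt N b1 b2 Y1 Y2) = bv (pt N b1 b2 (Y1 + int L) Y2)"
  unfolding z1b_def pt_def by (simp add: kk_shift)
lemma z2b_pt: "z2b N L (pt N b1 b2 Y1 Y2) = bv (pt N b1 b2 Y1 (Y2 + int L))"
  unfolding z2b_def pt_def by (simp add: kk_shift)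

lemma kdot_pt1: "1 \<le> b1 \<Longrightarrow> b1 \<le> int N \<Longrightarrow> kdot N L (fst (pt N b1 b2 Y1 Y2)) = dJ L Y1"
  unfolding pt_def by (simp add: kdot_kk)
lemma kdot_pt2: "1 \<le> b2 \<Longrightarrow> b2 \<le> int N \<Longrightarrow> kdot N L (snd (pt N b1 b2 Y1 Y2)) = dJ L Y2"
  unfolding pt_def by (simp add: kdot_kk)
lemma kbar_pt1: "1 \<le> b1 \<Longrightarrow> b1 \<le> int N \<Longrightarrow> kbar N (fst (pt N b1 b2 Y1 Y2)) = b1"
  unfolding pt_def by (simp add: kbar_kk)
lemma kbar_pt2: "1 \<le> b2 \<Longrightarrow> b2 \<le> int N \<Longrightarrow> kbar N (snd (pt N b1 b2 Y1 Y2)) = b2"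
  unfolding pt_def by (simp add: kbar_kk)

definition Phi :: "nat \<Rightarrow> nat \<Rightarrow> vec \<Rightarrow> vec" where
  "Phi N L f = vadd (SS N L (RR N L f)) (vsub (Z1 N L f) (vsc (qq N ^ 2) (Z2 N L f)))"

definition mD1 :: "nat \<Rightarrow> nat \<Rightarrow> vec \<Rightarrow> vec" where
  "mD1 N L h = vsub (Z1 N L h) (Z2 N L h)"

lemma fsupp_Rb[simp]: "fsupp (Rb N L p)"
  unfolding Rb_def Let_def z1b_def z2b_def by simp

lemma fsupp_RR[simp]: "fsupp f \<Longrightarrow> fsupp (RR N L f)"
  unfolding RR_def by (rule fsupp_lin) simp_all

lemma bv_swapZE: "N > 0 \<Longrightarrow> L > 0 \<Longrightarrow> bv P (swapZE N L x) = bv (swapZE N L P) x"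
  unfolding bv_def by (metis swapZE_inv)

lemma bv_shift1: "bv P (fst x + int N * int L, snd x) = bv (fst P - int N * int L, snd P) x"
  unfolding bv_def by (cases x, cases P) auto
lemma bv_shift2: "bv P (fst x, snd x + int N * int L) = bv (fst P, snd P - int N * int L) x"
  unfolding bv_def by (cases x, cases P) auto

lemma shift1_pt: "(fst (pt N b1 b2 Y1 Y2) - int N * int L, snd (pt N b1 b2 Y1 Y2)) = pt N b1 b2 (Y1 + int L) Y2"
  unfolding pt_def by (simp add: kk_shift)
lemma shift2_pt: "(fst (pt N b1 b2 Y1 Y2), snd (pt N b1 b2 Y1 Y2) - int N * int L) = pt N b1 b2 Y1 (Y2 + int L)"
  unfolding pt_def by (simp add: kk_shift)

definition P5 :: "nat \<Rightarrow> nat \<Rightarrow> int \<Rightarrow> int \<Rightarrow> int \<Rightarrow> int \<Rightarrow> int \<times> int" where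
  "P5 N L b1 b2 I1 I2 = (if dJ L I1 > dJ L I2
      then pt N b1 b2 (dJ L I1 + int L * uJ L I2) (dJ L I2 + int L * uJ L I1 + int L)
      else pt N b1 b2 (dJ L I1 + int L * uJ L I2 + int L) (dJ L I2 + int L * uJ L I1))"

lemma Phi_bv:
  assumes N: "N > 0" and L: "L > 0" and b1: "1 \<le> b1" "b1 \<le> int N" and b2: "1 \<le> b2" "b2 \<le> int N"
  shows "Phi N L (bv (pt N b1 b2 I1 I2)) = (\<lambda>x.
     bv (pt N b1 b2 (I1 + int L) I2) x - qq N ^ 2 * bv (pt N b1 b2 I1 (I2 + int L)) x +
     (if dJ L I1 = dJ L I2
      then qq N ^ 2 * bv (pt N b1 b2 I2 (I1 + int L)) x - bv (pt N b1 b2 (I2 + int L) I1) x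
      else qq N * bv (pt N b1 b2 I2 (I1 + int L)) x - qq N * bv (pt N b1 b2 (I2 + int L) I1) x
           + (qq N ^ 2 - 1) * bv (P5 N L b1 b2 I1 I2) x))" (is "_ = ?R")
proof
  fix x
  let ?p = "pt N b1 b2 I1 I2"
  have RR: "RR N L (bv ?p) = Rb N L ?p" unfolding RR_def by (rule lin_bv)
  have Z1: "Z1 N L (bv ?p) x = bv (pt N b1 b2 (I1 + int L) I2) x"
    by (simp add: Z1_eq bv_shift1 shift1_pt)
  have Z2: "Z2 N L (bv ?p) x = bv (pt N b1 b2 I1 (I2 + int L)) x"
    by (simp add: Z2_eq bv_shift2 shift2_pt)
  have SSb: "\<And>Y1 Y2. bv (pt N b1 b2 Y1 Y2) (swapZE N L x) = bv (pt N b1 b2 Y2 Y1) x"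
    using bv_swapZE[OF N L] swapZE_pt[OF N L b1 b2] by simp
  have SS: "SS N L (RR N L (bv ?p)) x = Rb N L ?p (swapZE N L x)"
    using SS_eq[OF N L fsupp_Rb] RR by simp
  show "Phi N L (bv ?p) x = ?R x"
  proof (cases "dJ L I1 = dJ L I2")
    case True
    then show ?thesis
      unfolding Phi_def vadd_def vsub_def vsc_def SS Z1 Z2
      by (simp add: Rb_def Let_def kdot_pt1[OF b1] kdot_pt2[OF b2] z1b_pt z2b_pt vsub_def vsc_def SSb)
  next
    case False
    show ?thesis
    proof (cases "dJ L I1 > dJ L I2")
      case True
      then show ?thesis using False
        unfolding Phi_def vadd_def vsub_def vsc_def SS Z1 Z2
        by (simp add: Rb_def Let_def kdot_pt1[OF b1] kdot_pt2[OF b2] z1b_pt z2b_pt vsub_def vsc_def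
            vadd_def SSb swapdot_pt[OF N L b1 b2] P5_def algebra_simps)
    next
      case F2: False
      then show ?thesis using False
        unfolding Phi_def vadd_def vsub_def vsc_def SS Z1 Z2
        by (simp add: Rb_def Let_def kdot_pt1[OF b1] kdot_pt2[OF b2] z1b_pt z2b_pt vsub_def vsc_def
            vadd_def SSb swapdot_pt[OF N L b1 b2] P5_def algebra_simps)
    qed
  qed
qed



lemma mD1_eq: "fsupp h \<Longrightarrow> mD1 N L h = (\<lambda>y. h (fst y + int N * int L, snd y) - h (fst y, snd y + int N * int L))"
  unfolding mD1_def by (simp add: Z1_eq Z2_eq vsub_def)

lemma fsupp_mD1[simp]: "fsupp h \<Longrightarrow> fsupp (mD1 N L h)"
  unfolding mD1_def by simp

lemma fsupp_Phi[simp]: "N > 0 \<Longrightarrow> L > 0 \<Longrightarrow> fsupp f \<Longrightarrow> fsupp (Phi N L f)"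
  unfolding Phi_def by simp

lemma inj_chain: "c \<noteq> 0 \<Longrightarrow> inj (\<lambda>n::nat. (a + int n * c, b - int n * c))"
  by (auto simp: inj_def)

lemma inj_chain': "c \<noteq> 0 \<Longrightarrow> inj (\<lambda>n::nat. (a - int n * c, b + int n * c))"
  by (auto simp: inj_def)

lemma finite_chain_set:
  assumes "fsupp g" "inj h"
  shows "finite {n. g (h n) \<noteq> 0}"
proof -
  have "{n. g (h n) \<noteq> 0} = h -` {x. g x \<noteq> 0}" by auto
  then show ?thesis using assms finite_vimageI unfolding fsupp_def by metis
qed

lemma Esc_inj:
  fixes h :: vec and c :: int and r :: K
  assumes fs: "fsupp h" and c: "c \<noteq> 0" and r: "r \<noteq> 0"
    and eq: "\<And>x. r * h (fst x, snd x + c) - h (fst x + c, snd x) = 0"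
  shows "h = (\<lambda>x. 0)"
proof (rule ccontr)
  assume "h \<noteq> (\<lambda>x. 0)"
  then obtain x where hx: "h x \<noteq> 0" by (meson ext)
  obtain a b where x: "x = (a, b)" by (cases x)
  have pow: "h (a + int n * c, b - int n * c) = r ^ n * h x" for n :: nat
  proof (induction n)
    case 0 then show ?case using x by simp
  next
    case (Suc n)
    have e0: "r * h (a + int n * c, b - int n * c - c + c) - h (a + int n * c + c, b - int n * c - c) = 0"
      using eq[of "(a + int n * c, b - int n * c - c)"] by simp
    have p1: "(a + int n * c + c, b - int n * c - c) = (a + int (Suc n) * c, b - int (Suc n) * c)"
      by (simp add: algebra_simps)
    have "h (a + int (Suc n) * c, b - int (Suc n) * c) = r * h (a + int n * c, b - int n * c)"
      using e0 unfolding p1 by simp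
    then show ?case using Suc by simp
  qed
  have "{n. h (a + int n * c, b - int n * c) \<noteq> 0} = UNIV"
    using pow hx r by simp
  moreover have "finite {n. h (a + int n * c, b - int n * c) \<noteq> 0}"
    using finite_chain_set[OF fs inj_chain[OF c]] .
  ultimately show False by simp
qed

lemma DL_a:
  fixes g :: vec and c :: int
  assumes fs: "fsupp g" and c: "c \<noteq> 0" and gx: "g x \<noteq> 0"
  shows "\<exists>n::nat. g (fst x - int n * c, snd x + int n * c) \<noteq> 0 \<and>
     g (fst x - int n * c, snd x + int n * c) - g (fst x - int n * c - c, snd x + int n * c + c) \<noteq> 0"
proof -
  obtain a b where x: "x = (a, b)" by (cases x)
  let ?T = "{n. g (a - int n * c, b + int n * c) \<noteq> 0}"
  have fin: "finite ?T" using finite_chain_set[OF fs inj_chain'[OF c]] .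
  have "0 \<in> ?T" using gx x by simp
  define n where "n = Max ?T"
  have nT: "n \<in> ?T" unfolding n_def using fin \<open>0 \<in> ?T\<close> Max_in by blast
  have "Suc n \<notin> ?T"
  proof
    assume "Suc n \<in> ?T"
    then have "Suc n \<le> n" unfolding n_def using Max_ge[OF fin] by blast
    then show False by simp
  qed
  then have z: "g (a - int (Suc n) * c, b + int (Suc n) * c) = 0" by simp
  have pe: "(a - int n * c - c, b + int n * c + c) = (a - int (Suc n) * c, b + int (Suc n) * c)"
    by (simp add: algebra_simps)
  have "g (a - int n * c - c, b + int n * c + c) = 0" using z unfolding pe .
  then show ?thesis using nT x by (intro exI[of _ n]) simp
qed

lemma DL_b:
  fixes g :: vec and c :: int
  assumes fs: "fsupp g" and c: "c \<noteq> 0" and gx: "g x \<noteq> 0"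
  shows "\<exists>n::nat. g (fst x + int n * c, snd x - int n * c) \<noteq> 0 \<and>
     g (fst x + int n * c + c, snd x - int n * c - c) - g (fst x + int n * c, snd x - int n * c) \<noteq> 0"
proof -
  obtain a b where x: "x = (a, b)" by (cases x)
  let ?T = "{n. g (a + int n * c, b - int n * c) \<noteq> 0}"
  have fin: "finite ?T" using finite_chain_set[OF fs inj_chain[OF c]] .
  have "0 \<in> ?T" using gx x by simp
  define n where "n = Max ?T"
  have nT: "n \<in> ?T" unfolding n_def using fin \<open>0 \<in> ?T\<close> Max_in by blast
  have "Suc n \<notin> ?T"
  proof
    assume "Suc n \<in> ?T"
    then have "Suc n \<le> n" unfolding n_def using Max_ge[OF fin] by blast
    then show False by simp
  qed
  then have z: "g (a + int (Suc n) * c, b - int (Suc n) * c) = 0" by simp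
  have pe: "(a + int n * c + c, b - int n * c - c) = (a + int (Suc n) * c, b - int (Suc n) * c)"
    by (simp add: algebra_simps)
  have "g (a + int n * c + c, b - int n * c - c) = 0" using z unfolding pe .
  then show ?thesis using nT x by (intro exI[of _ n]) simp
qed

lemma NL_nz: "N > 0 \<Longrightarrow> L > 0 \<Longrightarrow> int N * int L \<noteq> 0" by simp

lemma DLa_mD1:
  assumes N: "N > 0" and L: "L > 0" and fs: "fsupp g" and gx: "g x \<noteq> 0"
  shows "\<exists>n::nat. mD1 N L g (fst x - int (Suc n) * (int N * int L), snd x + int n * (int N * int L)) \<noteq> 0"
proof -
  obtain n where "g (fst x - int n * (int N * int L), snd x + int n * (int N * int L)) -
     g (fst x - int n * (int N * int L) - int N * int L, snd x + int n * (int N * int L) + int N * int L) \<noteq> 0"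
    using DL_a[OF fs NL_nz[OF N L] gx] by blast
  then show ?thesis by (intro exI[of _ n]) (simp add: mD1_eq[OF fs] algebra_simps)
qed

lemma DLb_mD1:
  assumes N: "N > 0" and L: "L > 0" and fs: "fsupp g" and gx: "g x \<noteq> 0"
  shows "\<exists>n::nat. mD1 N L g (fst x + int n * (int N * int L), snd x - int (Suc n) * (int N * int L)) \<noteq> 0"
proof -
  obtain n where "g (fst x + int n * (int N * int L) + int N * int L, snd x - int n * (int N * int L) - int N * int L) -
     g (fst x + int n * (int N * int L), snd x - int n * (int N * int L)) \<noteq> 0"
    using DL_b[OF fs NL_nz[OF N L] gx] by blast
  then show ?thesis by (intro exI[of _ n]) (simp add: mD1_eq[OF fs] algebra_simps)
qed

lemma mD1_inj:
  assumes N: "N > 0" and L: "L > 0" and fs: "fsupp g" and z: "mD1 N L g = (\<lambda>x. 0)"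
  shows "g = (\<lambda>x. 0)"
proof (rule ccontr)
  assume "g \<noteq> (\<lambda>x. 0)"
  then obtain x where "g x \<noteq> 0" by (meson ext)
  then obtain n where "mD1 N L g (fst x - int (Suc n) * (int N * int L), snd x + int n * (int N * int L)) \<noteq> 0"
    using DLa_mD1[OF N L fs] by blast
  then show False using z by simp
qed


lemma vadd_app: "vadd f g x = f x + g x" unfolding vadd_def by simp
lemma vsub_app: "vsub f g x = f x - g x" unfolding vsub_def by simp
lemma vsc_app: "vsc c f x = c * f x" unfolding vsc_def by simp
lemma Z1_app: "fsupp f \<Longrightarrow> Z1 N L f x = f (fst x + int N * int L, snd x)" by (simp add: Z1_eq)
lemma Z2_app: "fsupp f \<Longrightarrow> Z2 N L f x = f (fst x, snd x + int N * int L)" by (simp add: Z2_eq)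
lemma mD1_app: "fsupp f \<Longrightarrow> mD1 N L f x = f (fst x + int N * int L, snd x) - f (fst x, snd x + int N * int L)"
  by (simp add: mD1_eq)

lemma eqn_iff:
  assumes N: "N > 0" and L: "L > 0" and f: "fsupp f" and Y: "fsupp Y"
  shows "(vsub (Z1 N L (vsub (vsc (qq N ^ 2) (Z2 N L Y)) (Z1 N L Y)))
               (Z2 N L (vsub (vsc (qq N ^ 2) (Z2 N L Y)) (Z1 N L Y))) =
          vsub (Z1 N L (vsub (vsub (vsc (qq N ^ 2) (Z2 N L f)) (Z1 N L f)) (SS N L (RR N L f))))
               (vsc (qq N ^ 2) (Z2 N L (vsub (vsub (vsc (qq N ^ 2) (Z2 N L f)) (Z1 N L f)) (SS N L (RR N L f))))))
     \<longleftrightarrow> mD1 N L Y = Phi N L f" (is "?A = ?B \<longleftrightarrow> _")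
proof -
  let ?c = "int N * int L"
  let ?S = "SS N L (RR N L f)"
  have fS: "fsupp ?S" using N L f by simp
  define H where "H = vsub (mD1 N L Y) (Phi N L f)"
  have fH: "fsupp H" unfolding H_def using N L f Y by simp
  have Hx: "H x = (Y (fst x + ?c, snd x) - Y (fst x, snd x + ?c)) -
      (?S x + f (fst x + ?c, snd x) - qq N ^ 2 * f (fst x, snd x + ?c))" for x
    unfolding H_def Phi_def using N L f Y fS
    by (simp add: mD1_app Z1_app Z2_app vadd_app vsub_app vsc_app)
  have diff: "?A x - ?B x = qq N ^ 2 * H (fst x, snd x + ?c) - H (fst x + ?c, snd x)" for x
    unfolding Hx using N L f Y fS
    by (simp add: Z1_app Z2_app vadd_app vsub_app vsc_app algebra_simps)
  have "?A = ?B \<longleftrightarrow> (\<forall>x. ?A x - ?B x = 0)" by (auto simp: fun_eq_iff)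
  also have "\<dots> \<longleftrightarrow> (\<forall>x. qq N ^ 2 * H (fst x, snd x + ?c) - H (fst x + ?c, snd x) = 0)"
    using diff by simp
  also have "\<dots> \<longleftrightarrow> H = (\<lambda>x. 0)"
  proof
    assume "\<forall>x. qq N ^ 2 * H (fst x, snd x + ?c) - H (fst x + ?c, snd x) = 0"
    then show "H = (\<lambda>x. 0)" using Esc_inj[OF fH NL_nz[OF N L] qq2_nz] by blast
  qed simp
  also have "\<dots> \<longleftrightarrow> mD1 N L Y = Phi N L f"
    unfolding H_def vsub_def fun_eq_iff by simp
  finally show ?thesis .
qed

lemma cT_char:
  assumes N: "N > 0" and L: "L > 0" and f: "fsupp f" and X: "fsupp X" and eq: "mD1 N L X = Phi N L f"
  shows "cT N L f = vsub X f"
  unfolding cT_def Let_def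
proof (rule the_equality)
  have XY: "vadd (vsub X f) f = X" unfolding vadd_def vsub_def by simp
  show "fsupp (vsub X f) \<and> vsub (Z1 N L (vsub (vsc (qq N ^ 2) (Z2 N L (vadd (vsub X f) f))) (Z1 N L (vadd (vsub X f) f))))
               (Z2 N L (vsub (vsc (qq N ^ 2) (Z2 N L (vadd (vsub X f) f))) (Z1 N L (vadd (vsub X f) f)))) =
          vsub (Z1 N L (vsub (vsub (vsc (qq N ^ 2) (Z2 N L f)) (Z1 N L f)) (SS N L (RR N L f))))
               (vsc (qq N ^ 2) (Z2 N L (vsub (vsub (vsc (qq N ^ 2) (Z2 N L f)) (Z1 N L f)) (SS N L (RR N L f)))))"
    using eqn_iff[OF N L f, of "vadd (vsub X f) f"] X f eq unfolding XY by simp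
next
  fix g assume g: "fsupp g \<and> vsub (Z1 N L (vsub (vsc (qq N ^ 2) (Z2 N L (vadd g f))) (Z1 N L (vadd g f))))
               (Z2 N L (vsub (vsc (qq N ^ 2) (Z2 N L (vadd g f))) (Z1 N L (vadd g f)))) =
          vsub (Z1 N L (vsub (vsub (vsc (qq N ^ 2) (Z2 N L f)) (Z1 N L f)) (SS N L (RR N L f))))
               (vsc (qq N ^ 2) (Z2 N L (vsub (vsub (vsc (qq N ^ 2) (Z2 N L f)) (Z1 N L f)) (SS N L (RR N L f)))))"
  then have fg: "fsupp g" by simp
  have "mD1 N L (vadd g f) = Phi N L f"
    using eqn_iff[OF N L f, of "vadd g f"] g f by simp
  then have e1: "mD1 N L (vadd g f) x = Phi N L f x" for x by simp
  have e2: "mD1 N L X x = Phi N L f x" for x using eq by simp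
  have "mD1 N L (vsub (vadd g f) X) x = 0" for x
    using e1[of x] e2[of x] fg f X by (simp add: mD1_app vsub_app vadd_app algebra_simps)
  then have "mD1 N L (vsub (vadd g f) X) = (\<lambda>x. 0)" by (simp add: fun_eq_iff)
  then have "vsub (vadd g f) X = (\<lambda>x. 0)"
    using mD1_inj[OF N L] fg f X by simp
  then show "g = vsub X f" unfolding vsub_def vadd_def fun_eq_iff by (simp add: algebra_simps)
qed



definition Dv :: "nat \<Rightarrow> nat \<Rightarrow> vec \<Rightarrow> bool" where
  "Dv N L h \<longleftrightarrow> (\<exists>X. fsupp X \<and> mD1 N L X = h)"

lemma Dv_add: "Dv N L h1 \<Longrightarrow> Dv N L h2 \<Longrightarrow> Dv N L (vadd h1 h2)"
proof -
  assume "Dv N L h1" "Dv N L h2"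
  then obtain X1 X2 where X: "fsupp X1" "mD1 N L X1 = h1" "fsupp X2" "mD1 N L X2 = h2"
    unfolding Dv_def by blast
  have "mD1 N L (vadd X1 X2) = vadd h1 h2"
    using X by (auto simp: fun_eq_iff mD1_app vadd_app algebra_simps)
  then show ?thesis unfolding Dv_def using X by (intro exI[of _ "vadd X1 X2"]) simp
qed

lemma Dv_sc: "Dv N L h \<Longrightarrow> Dv N L (vsc a h)"
proof -
  assume "Dv N L h"
  then obtain X where X: "fsupp X" "mD1 N L X = h" unfolding Dv_def by blast
  have "mD1 N L (vsc a X) = vsc a h"
    using X by (auto simp: fun_eq_iff mD1_app vsc_app algebra_simps)
  then show ?thesis unfolding Dv_def using X by (intro exI[of _ "vsc a X"]) simp
qed

lemma Dv_sub: "Dv N L h1 \<Longrightarrow> Dv N L h2 \<Longrightarrow> Dv N L (vsub h1 h2)"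
proof -
  assume "Dv N L h1" "Dv N L h2"
  then have "Dv N L (vadd h1 (vsc (-1) h2))" using Dv_add Dv_sc by blast
  moreover have "vadd h1 (vsc (-1) h2) = vsub h1 h2" by (simp add: fun_eq_iff vadd_app vsc_app vsub_app)
  ultimately show ?thesis by simp
qed

lemma Dv_zero: "Dv N L (\<lambda>x. 0)"
  unfolding Dv_def by (intro exI[of _ "\<lambda>x. 0"]) (simp add: fun_eq_iff mD1_app)

lemma Dv_step: "Dv N L (vsub (bv y) (bv (fst y + int N * int L, snd y - int N * int L)))"
proof -
  let ?X = "bv (fst y + int N * int L, snd y)"
  have "mD1 N L ?X x = vsub (bv y) (bv (fst y + int N * int L, snd y - int N * int L)) x" for x
  proof -
    have "mD1 N L ?X x = ?X (fst x + int N * int L, snd x) - ?X (fst x, snd x + int N * int L)"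
      by (rule mD1_app) simp
    then show ?thesis by (cases x, cases y) (auto simp: bv_def vsub_app)
  qed
  then have "mD1 N L ?X = vsub (bv y) (bv (fst y + int N * int L, snd y - int N * int L))" by blast
  then show ?thesis unfolding Dv_def by (intro exI[of _ ?X]) simp
qed

lemma Dv_chain_nat: "Dv N L (vsub (bv y) (bv (fst y + int n * (int N * int L), snd y - int n * (int N * int L))))"
proof (induction n)
  case 0
  have "vsub (bv y) (bv y) = (\<lambda>x. 0)" by (simp add: fun_eq_iff vsub_app)
  then show ?case using Dv_zero by simp
next
  case (Suc n)
  let ?c = "int N * int L"
  let ?yn = "(fst y + int n * ?c, snd y - int n * ?c)"
  have st: "Dv N L (vsub (bv ?yn) (bv (fst ?yn + ?c, snd ?yn - ?c)))" by (rule Dv_step)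
  have pe: "(fst ?yn + ?c, snd ?yn - ?c) = (fst y + int (Suc n) * ?c, snd y - int (Suc n) * ?c)"
    by (simp add: algebra_simps)
  have "vadd (vsub (bv y) (bv ?yn)) (vsub (bv ?yn) (bv (fst ?yn + ?c, snd ?yn - ?c))) =
        vsub (bv y) (bv (fst y + int (Suc n) * ?c, snd y - int (Suc n) * ?c))"
    unfolding pe by (simp add: fun_eq_iff vadd_app vsub_app)
  then show ?case using Dv_add[OF Suc st] by simp
qed

lemma Dv_chain_int: "Dv N L (vsub (bv y) (bv (fst y + m * (int N * int L), snd y - m * (int N * int L))))"
proof (cases "m \<ge> 0")
  case True
  then obtain n where "m = int n" by (metis nonneg_int_cases)
  then show ?thesis using Dv_chain_nat by simp
next
  case False
  let ?c = "int N * int L"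
  obtain n where n: "- m = int n" using False by (metis nonneg_int_cases neg_0_le_iff_le linorder_not_le less_imp_le)
  let ?y' = "(fst y + m * ?c, snd y - m * ?c)"
  have "Dv N L (vsub (bv ?y') (bv (fst ?y' + int n * ?c, snd ?y' - int n * ?c)))" by (rule Dv_chain_nat)
  moreover have "(fst ?y' + int n * ?c, snd ?y' - int n * ?c) = y"
  proof -
    have "m = - int n" using n by simp
    then show ?thesis by (cases y) (simp add: algebra_simps)
  qed
  ultimately have "Dv N L (vsub (bv ?y') (bv y))" by simp
  then have "Dv N L (vsc (-1) (vsub (bv ?y') (bv y)))" by (rule Dv_sc)
  moreover have "vsc (-1) (vsub (bv ?y') (bv y)) = vsub (bv y) (bv ?y')"
    by (simp add: fun_eq_iff vsc_app vsub_app)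
  ultimately show ?thesis by simp
qed

lemma Dv_chain_pt:
  assumes "Y1' = Y1 - m * int L" "Y2' = Y2 + m * int L"
  shows "Dv N L (vsub (bv (pt N b1 b2 Y1 Y2)) (bv (pt N b1 b2 Y1' Y2')))"
proof -
  have "pt N b1 b2 Y1' Y2' = (fst (pt N b1 b2 Y1 Y2) + m * (int N * int L), snd (pt N b1 b2 Y1 Y2) - m * (int N * int L))"
    unfolding pt_def kk_def assms by (simp add: algebra_simps)
  then show ?thesis using Dv_chain_int by simp
qed


lemma Phi_Dv:
  assumes N: "N > 0" and L: "L > 0" and b1: "1 \<le> b1" "b1 \<le> int N" and b2: "1 \<le> b2" "b2 \<le> int N"
  shows "Dv N L (Phi N L (bv (pt N b1 b2 I1 I2)))"
proof -
  let ?q = "qq N"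
  let ?P1 = "pt N b1 b2 (I1 + int L) I2"
  let ?P2 = "pt N b1 b2 I1 (I2 + int L)"
  let ?P3 = "pt N b1 b2 I2 (I1 + int L)"
  let ?P4 = "pt N b1 b2 (I2 + int L) I1"
  let ?P5 = "P5 N L b1 b2 I1 I2"
  have I1: "I1 = dJ L I1 + int L * uJ L I1" by (rule J_decomp[OF L])
  have I2: "I2 = dJ L I2 + int L * uJ L I2" by (rule J_decomp[OF L])
  have Phi: "Phi N L (bv (pt N b1 b2 I1 I2)) = (\<lambda>x.
     bv ?P1 x - qq N ^ 2 * bv ?P2 x +
     (if dJ L I1 = dJ L I2
      then qq N ^ 2 * bv ?P3 x - bv ?P4 x
      else qq N * bv ?P3 x - qq N * bv ?P4 x + (qq N ^ 2 - 1) * bv ?P5 x))"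
    by (rule Phi_bv[OF N L b1 b2])
  show ?thesis
  proof (cases "dJ L I1 = dJ L I2")
    case True
    have diff: "I1 - I2 = int L * (uJ L I1 - uJ L I2)" using I1 I2 True by (simp add: algebra_simps)
    have e: "Phi N L (bv (pt N b1 b2 I1 I2)) = vsub (vsub (bv ?P1) (bv ?P4)) (vsc (?q ^ 2) (vsub (bv ?P2) (bv ?P3)))"
      unfolding Phi using True by (simp add: fun_eq_iff vsub_app vsc_app algebra_simps)
    have a: "Dv N L (vsub (bv ?P1) (bv ?P4))"
      by (rule Dv_chain_pt[where m = "uJ L I1 - uJ L I2"]) (use diff in \<open>simp_all add: algebra_simps\<close>)
    have b: "Dv N L (vsub (bv ?P2) (bv ?P3))"
      by (rule Dv_chain_pt[where m = "uJ L I1 - uJ L I2"]) (use diff in \<open>simp_all add: algebra_simps\<close>)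
    show ?thesis unfolding e by (rule Dv_sub[OF a Dv_sc[OF b]])
  next
    case False
    have e: "Phi N L (bv (pt N b1 b2 I1 I2)) = vadd (vadd (vsub (bv ?P1) (bv ?P2))
               (vsc (?q ^ 2 - 1) (vsub (bv ?P5) (bv ?P2)))) (vsc ?q (vsub (bv ?P3) (bv ?P4)))"
      unfolding Phi using False by (simp add: fun_eq_iff vsub_app vsc_app vadd_app algebra_simps)
    have a: "Dv N L (vsub (bv ?P1) (bv ?P2))"
      by (rule Dv_chain_pt[where m = 1]) simp_all
    have c: "Dv N L (vsub (bv ?P3) (bv ?P4))"
      by (rule Dv_chain_pt[where m = "-1"]) simp_all
    define d1 where "d1 = dJ L I1"
    define d2 where "d2 = dJ L I2"
    define u1 where "u1 = uJ L I1"
    define u2 where "u2 = uJ L I2"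
    have I1e: "I1 = d1 + int L * u1" using I1 unfolding d1_def u1_def .
    have I2e: "I2 = d2 + int L * u2" using I2 unfolding d2_def u2_def .
    have P5e: "?P5 = (if d1 > d2 then pt N b1 b2 (d1 + int L * u2) (d2 + int L * u1 + int L)
                      else pt N b1 b2 (d1 + int L * u2 + int L) (d2 + int L * u1))"
      unfolding P5_def d1_def d2_def u1_def u2_def by simp
    have b: "Dv N L (vsub (bv ?P5) (bv ?P2))"
    proof (cases "d1 > d2")
      case True
      then have "?P5 = pt N b1 b2 (d1 + int L * u2) (d2 + int L * u1 + int L)" using P5e by simp
      moreover have "Dv N L (vsub (bv (pt N b1 b2 (d1 + int L * u2) (d2 + int L * u1 + int L))) (bv ?P2))"
        by (rule Dv_chain_pt[where m = "u2 - u1"]) (use I1e I2e in \<open>simp_all add: algebra_simps\<close>)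
      ultimately show ?thesis by simp
    next
      case F: False
      then have "?P5 = pt N b1 b2 (d1 + int L * u2 + int L) (d2 + int L * u1)" using P5e by simp
      moreover have "Dv N L (vsub (bv (pt N b1 b2 (d1 + int L * u2 + int L) (d2 + int L * u1))) (bv ?P2))"
        by (rule Dv_chain_pt[where m = "u2 - u1 + 1"]) (use I1e I2e in \<open>simp_all add: algebra_simps\<close>)
      ultimately show ?thesis by simp
    qed
    show ?thesis unfolding e by (rule Dv_add[OF Dv_add[OF a Dv_sc[OF b]] Dv_sc[OF c]])
  qed
qed

definition Tt :: "nat \<Rightarrow> nat \<Rightarrow> int \<times> int \<Rightarrow> vec" where
  "Tt N L p = (SOME X. fsupp X \<and> mD1 N L X = Phi N L (bv p))"

lemma Tt_props:
  assumes N: "N > 0" and L: "L > 0" and b1: "1 \<le> b1" "b1 \<le> int N" and b2: "1 \<le> b2" "b2 \<le> int N"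
  shows "fsupp (Tt N L (pt N b1 b2 I1 I2)) \<and> mD1 N L (Tt N L (pt N b1 b2 I1 I2)) = Phi N L (bv (pt N b1 b2 I1 I2))"
  using Phi_Dv[OF N L b1 b2, of I1 I2] unfolding Dv_def Tt_def by (rule someI_ex)

lemma cT_Tt:
  assumes N: "N > 0" and L: "L > 0" and b1: "1 \<le> b1" "b1 \<le> int N" and b2: "1 \<le> b2" "b2 \<le> int N"
  shows "cT N L (bv (pt N b1 b2 I1 I2)) = vsub (Tt N L (pt N b1 b2 I1 I2)) (bv (pt N b1 b2 I1 I2))"
  using Tt_props[OF N L b1 b2, of I1 I2] by (intro cT_char[OF N L]) auto



lemma u_order:
  fixes L d1 d2 u1 u2 :: int
  assumes L: "0 < L" and d: "1 \<le> d1" "d1 \<le> L" "1 \<le> d2" "d2 \<le> L" and lt: "d2 + L * u2 < d1 + L * u1"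
  shows "u2 \<le> u1 \<and> (d1 \<le> d2 \<longrightarrow> u2 < u1)"
proof -
  have a: "u2 \<le> u1"
  proof (rule ccontr)
    assume "\<not> u2 \<le> u1"
    then have "u1 + 1 \<le> u2" by simp
    then have "L * (u1 + 1) \<le> L * u2" using L by (simp add: mult_left_mono)
    then show False using lt d by (simp add: algebra_simps)
  qed
  moreover have "d1 \<le> d2 \<longrightarrow> u2 < u1"
  proof
    assume "d1 \<le> d2"
    show "u2 < u1"
    proof (rule ccontr)
      assume "\<not> u2 < u1"
      then have "u1 = u2" using a by simp
      then show False using lt \<open>d1 \<le> d2\<close> by simp
    qed
  qed
  ultimately show ?thesis by blast
qed

lemma mono_L: "0 < (L::int) \<Longrightarrow> a \<le> b \<Longrightarrow> L * a \<le> L * b" by (simp add: mult_left_mono)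

definition P5J :: "nat \<Rightarrow> int \<Rightarrow> int \<Rightarrow> int \<times> int" where
  "P5J L I1 I2 = (if dJ L I1 > dJ L I2
      then (dJ L I1 + int L * uJ L I2, dJ L I2 + int L * uJ L I1 + int L)
      else (dJ L I1 + int L * uJ L I2 + int L, dJ L I2 + int L * uJ L I1))"

lemma P5_P5J: "P5 N L b1 b2 I1 I2 = pt N b1 b2 (fst (P5J L I1 I2)) (snd (P5J L I1 I2))"
  unfolding P5_def P5J_def by simp

definition PJ :: "nat \<Rightarrow> int \<Rightarrow> int \<Rightarrow> (int \<times> int) set" where
  "PJ L I1 I2 = {(I1 + int L, I2), (I1, I2 + int L), (I2, I1 + int L), (I2 + int L, I1), P5J L I1 I2}"

lemma Phi_nz:
  assumes N: "N > 0" and L: "L > 0" and b1: "1 \<le> b1" "b1 \<le> int N" and b2: "1 \<le> b2" "b2 \<le> int N"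
    and nz: "Phi N L (bv (pt N b1 b2 I1 I2)) y \<noteq> 0"
  shows "\<exists>A B. (A, B) \<in> PJ L I1 I2 \<and> y = pt N b1 b2 A B"
proof (rule ccontr)
  assume a: "\<not> ?thesis"
  have "bv (pt N b1 b2 A B) y = 0" if "(A, B) \<in> PJ L I1 I2" for A B
    using a that unfolding bv_def by auto
  then have "Phi N L (bv (pt N b1 b2 I1 I2)) y = 0"
    unfolding Phi_bv[OF N L b1 b2] P5_P5J PJ_def by simp
  then show False using nz by simp
qed

lemma kk_plus: "kk N b A + int n * (int N * int L) = kk N b (A - int n * int L)"
  unfolding kk_def by (simp add: algebra_simps)

lemma Xsupp:
  assumes N: "N > 0" and L: "L > 0" and b1: "1 \<le> b1" "b1 \<le> int N" and b2: "1 \<le> b2" "b2 \<le> int N"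
    and nz: "Tt N L (pt N b1 b2 I1 I2) x \<noteq> 0"
  shows "\<exists>Y1 Y2. x = pt N b1 b2 Y1 Y2 \<and>
     (\<exists>A B n. (A, B) \<in> PJ L I1 I2 \<and> Y1 = A - int (Suc n) * int L \<and> Y2 = B + int n * int L) \<and>
     (\<exists>A B n. (A, B) \<in> PJ L I1 I2 \<and> Y1 = A + int n * int L \<and> Y2 = B - int (Suc n) * int L)"
proof -
  let ?X = "Tt N L (pt N b1 b2 I1 I2)"
  let ?c = "int N * int L"
  have TP: "fsupp ?X" "mD1 N L ?X = Phi N L (bv (pt N b1 b2 I1 I2))" using Tt_props[OF N L b1 b2] by auto
  obtain n where n: "mD1 N L ?X (fst x - int (Suc n) * ?c, snd x + int n * ?c) \<noteq> 0"
    using DLa_mD1[OF N L TP(1) nz] by blast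
  obtain A B where AB: "(A, B) \<in> PJ L I1 I2" "(fst x - int (Suc n) * ?c, snd x + int n * ?c) = pt N b1 b2 A B"
    using Phi_nz[OF N L b1 b2] n TP(2) by metis
  have x1: "x = pt N b1 b2 (A - int (Suc n) * int L) (B + int n * int L)"
  proof -
    have "fst x = kk N b1 A + int (Suc n) * ?c" "snd x = kk N b2 B - int n * ?c"
      using AB(2) unfolding pt_def by auto
    then show ?thesis unfolding pt_def kk_def by (cases x) (simp add: algebra_simps)
  qed
  obtain n' where n': "mD1 N L ?X (fst x + int n' * ?c, snd x - int (Suc n') * ?c) \<noteq> 0"
    using DLb_mD1[OF N L TP(1) nz] by blast
  obtain A' B' where AB': "(A', B') \<in> PJ L I1 I2" "(fst x + int n' * ?c, snd x - int (Suc n') * ?c) = pt N b1 b2 A' B'"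
    using Phi_nz[OF N L b1 b2] n' TP(2) by metis
  have x2: "x = pt N b1 b2 (A' + int n' * int L) (B' - int (Suc n') * int L)"
  proof -
    have "fst x = kk N b1 A' - int n' * ?c" "snd x = kk N b2 B' + int (Suc n') * ?c"
      using AB'(2) unfolding pt_def by auto
    then show ?thesis unfolding pt_def kk_def by (cases x) (simp add: algebra_simps)
  qed
  have e: "A - int (Suc n) * int L = A' + int n' * int L" "B + int n * int L = B' - int (Suc n') * int L"
    using x1 x2 N by auto
  show ?thesis
    apply (rule exI[of _ "A - int (Suc n) * int L"], rule exI[of _ "B + int n * int L"])
    using x1 AB(1) AB'(1) e by blast
qed


lemma T1_arith:
  fixes Lr d1 d2 u1 u2 I1 I2 A A' Y1 :: int and n n' :: nat
  assumes Lr: "0 < Lr" and d: "1 \<le> d1" "d1 \<le> Lr" "1 \<le> d2" "d2 \<le> Lr"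
    and I1: "I1 = d1 + Lr * u1" and I2: "I2 = d2 + Lr * u2" and gt: "I2 < I1"
    and A: "A \<in> {I1 + Lr, I1, I2, I2 + Lr, if d1 > d2 then d1 + Lr * u2 else d1 + Lr * u2 + Lr}"
    and A': "A' \<in> {I1 + Lr, I1, I2, I2 + Lr, if d1 > d2 then d1 + Lr * u2 else d1 + Lr * u2 + Lr}"
    and Y1: "Y1 = A - int (Suc n) * Lr" and Y1': "Y1 = A' + int n' * Lr"
  shows "I2 \<le> Y1 \<and> Y1 \<le> I1 \<and> (Y1 = I2 \<or> Y1 = I1 \<or> (\<exists>i\<ge>1. Y1 = I1 - i * Lr))"
proof -
  have uo: "u2 \<le> u1 \<and> (d1 \<le> d2 \<longrightarrow> u2 < u1)" using u_order[OF Lr d] gt I1 I2 by simp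
  have m1: "Lr * u2 \<le> Lr * u1" using uo Lr by (simp add: mult_left_mono)
  have m2: "d1 \<le> d2 \<longrightarrow> Lr * u2 + Lr \<le> Lr * u1"
  proof
    assume "d1 \<le> d2"
    then have "u2 + 1 \<le> u1" using uo by simp
    then have "Lr * (u2 + 1) \<le> Lr * u1" using Lr by (simp add: mult_left_mono)
    then show "Lr * u2 + Lr \<le> Lr * u1" by (simp add: algebra_simps)
  qed
  have nn: "0 \<le> int n * Lr" "0 \<le> int n' * Lr" using Lr by auto
  have Ya: "Y1 = A - int n * Lr - Lr" using Y1 by (simp add: algebra_simps)
  have "A' \<ge> I2" using A' d m1 I1 I2 gt Lr by (auto split: if_splits)
  then have low: "I2 \<le> Y1" using Y1' nn(2) by linarith
  have "A \<le> I1 + Lr" using A d m1 m2 I1 I2 gt Lr by (auto split: if_splits)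
  then have up: "Y1 \<le> I1" using Ya nn(1) by linarith
  have disj: "Y1 = I2 \<or> Y1 = I1 \<or> (\<exists>i\<ge>1. Y1 = I1 - i * Lr)"
  proof -
    consider (a1) "A = I1 + Lr" | (a2) "A = I1" | (a3) "A = I2" | (a4) "A = I2 + Lr"
      | (a5) "d1 > d2" "A = d1 + Lr * u2" | (a6) "\<not> d1 > d2" "A = d1 + Lr * u2 + Lr"
      using A by (cases "d2 < d1") auto
    then show ?thesis
    proof cases
      case a1
      show ?thesis
      proof (cases "n = 0")
        case True then show ?thesis using Ya a1 by simp
      next
        case False
        then have "int n \<ge> 1" by simp
        then show ?thesis using Ya a1 by (intro disjI2 disjI2 exI[of _ "int n"]) (simp add: algebra_simps)
      qed
    next
      case a2
      then show ?thesis using Ya by (intro disjI2 disjI2 exI[of _ "int n + 1"]) (simp add: algebra_simps)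
    next
      case a3
      then show ?thesis using Ya low nn Lr by simp
    next
      case a4
      then show ?thesis using Ya low nn by simp
    next
      case a5
      have "u1 - u2 + int n + 1 \<ge> 1" using uo by simp
      moreover have "Y1 = I1 - (u1 - u2 + int n + 1) * Lr" using a5 Ya I1 by (simp add: algebra_simps)
      ultimately show ?thesis by blast
    next
      case a6
      show ?thesis
      proof (cases "d1 = d2")
        case True
        then have "A = I2 + Lr" using a6 I2 by simp
        then show ?thesis using Ya low nn by simp
      next
        case False
        then have "d1 < d2" using a6 by simp
        then have "u1 - u2 + int n \<ge> 1" using uo by simp
        moreover have "Y1 = I1 - (u1 - u2 + int n) * Lr" using a6 Ya I1 by (simp add: algebra_simps)
        ultimately show ?thesis by blast
      qed
    qed
  qed
  show ?thesis using low up disj by blast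
qed

lemma T2_arith:
  fixes Lr d1 d2 u1 u2 I1 I2 A A' Y1 :: int and n n' :: nat
  assumes Lr: "0 < Lr" and d: "1 \<le> d1" "d1 \<le> Lr" "1 \<le> d2" "d2 \<le> Lr"
    and I1: "I1 = d1 + Lr * u1" and I2: "I2 = d2 + Lr * u2" and lt: "I1 < I2"
    and A: "A \<in> {I1 + Lr, I1, I2, I2 + Lr, if d1 > d2 then d1 + Lr * u2 else d1 + Lr * u2 + Lr}"
    and A': "A' \<in> {I1 + Lr, I1, I2, I2 + Lr, if d1 > d2 then d1 + Lr * u2 else d1 + Lr * u2 + Lr}"
    and Y1: "Y1 = A - int (Suc n) * Lr" and Y1': "Y1 = A' + int n' * Lr"
  shows "I1 \<le> Y1 \<and> Y1 \<le> I2"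
proof -
  have uo: "u1 \<le> u2 \<and> (d2 \<le> d1 \<longrightarrow> u1 < u2)" using u_order[OF Lr d(3,4,1,2)] lt I1 I2 by simp
  have m1: "Lr * u1 \<le> Lr * u2" using uo Lr by (simp add: mult_left_mono)
  have nn: "0 \<le> int n * Lr" "0 \<le> int n' * Lr" using Lr by auto
  have Ya: "Y1 = A - int n * Lr - Lr" using Y1 by (simp add: algebra_simps)
  have "A' \<ge> I1" using A' d m1 I1 I2 lt Lr by (auto split: if_splits)
  then have low: "I1 \<le> Y1" using Y1' nn(2) by linarith
  have "A \<le> I2 + Lr" using A d m1 I1 I2 lt Lr by (auto split: if_splits)
  then have up: "Y1 \<le> I2" using Ya nn(1) by linarith
  show ?thesis using low up by blast
qed

lemma sumPJ:
  assumes L: "L > 0" and AB: "(A, B) \<in> PJ L I1 I2"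
  shows "A + B = I1 + I2 + int L"
proof -
  have I1: "I1 = dJ L I1 + int L * uJ L I1" by (rule J_decomp[OF L])
  have I2: "I2 = dJ L I2 + int L * uJ L I2" by (rule J_decomp[OF L])
  show ?thesis using AB unfolding PJ_def P5J_def
    by (auto split: if_splits) (subst (3) I1, subst (3) I2, simp add: algebra_simps)+
qed



lemma PJ_fst:
  "(A, B) \<in> PJ L I1 I2 \<Longrightarrow> A \<in> {I1 + int L, I1, I2, I2 + int L,
     if dJ L I1 > dJ L I2 then dJ L I1 + int L * uJ L I2 else dJ L I1 + int L * uJ L I2 + int L}"
  unfolding PJ_def P5J_def by (auto split: if_splits)

lemma Xsupp_gt:
  assumes N: "N > 0" and L: "L > 0" and b1: "1 \<le> b1" "b1 \<le> int N" and b2: "1 \<le> b2" "b2 \<le> int N"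
    and gt: "I2 < I1" and nz: "Tt N L (pt N b1 b2 I1 I2) x \<noteq> 0"
  shows "\<exists>Y1 Y2. x = pt N b1 b2 Y1 Y2 \<and> Y1 + Y2 = I1 + I2 \<and> I2 \<le> Y1 \<and> Y1 \<le> I1 \<and>
     (Y1 = I2 \<or> Y1 = I1 \<or> (\<exists>i\<ge>1. Y1 = I1 - i * int L))"
proof -
  obtain Y1 Y2 A B n A' B' n' where x: "x = pt N b1 b2 Y1 Y2"
    and AB: "(A, B) \<in> PJ L I1 I2" "Y1 = A - int (Suc n) * int L" "Y2 = B + int n * int L"
    and AB': "(A', B') \<in> PJ L I1 I2" "Y1 = A' + int n' * int L"
    using Xsupp[OF N L b1 b2 nz] by blast
  have s: "Y1 + Y2 = I1 + I2" using sumPJ[OF L AB(1)] AB(2,3) by (simp add: algebra_simps)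
  have "I2 \<le> Y1 \<and> Y1 \<le> I1 \<and> (Y1 = I2 \<or> Y1 = I1 \<or> (\<exists>i\<ge>1. Y1 = I1 - i * int L))"
    by (rule T1_arith[OF _ _ _ _ _ J_decomp[OF L] J_decomp[OF L] gt PJ_fst[OF AB(1)] PJ_fst[OF AB'(1)] AB(2) AB'(2)])
       (use L dJ_range[OF L] in auto)
  then show ?thesis using x s by blast
qed

lemma Xsupp_lt:
  assumes N: "N > 0" and L: "L > 0" and b1: "1 \<le> b1" "b1 \<le> int N" and b2: "1 \<le> b2" "b2 \<le> int N"
    and lt: "I1 < I2" and nz: "Tt N L (pt N b1 b2 I1 I2) x \<noteq> 0"
  shows "\<exists>Y1 Y2. x = pt N b1 b2 Y1 Y2 \<and> Y1 + Y2 = I1 + I2 \<and> I1 \<le> Y1 \<and> Y1 \<le> I2"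
proof -
  obtain Y1 Y2 A B n A' B' n' where x: "x = pt N b1 b2 Y1 Y2"
    and AB: "(A, B) \<in> PJ L I1 I2" "Y1 = A - int (Suc n) * int L" "Y2 = B + int n * int L"
    and AB': "(A', B') \<in> PJ L I1 I2" "Y1 = A' + int n' * int L"
    using Xsupp[OF N L b1 b2 nz] by blast
  have s: "Y1 + Y2 = I1 + I2" using sumPJ[OF L AB(1)] AB(2,3) by (simp add: algebra_simps)
  have "I1 \<le> Y1 \<and> Y1 \<le> I2"
    by (rule T2_arith[OF _ _ _ _ _ J_decomp[OF L] J_decomp[OF L] lt PJ_fst[OF AB(1)] PJ_fst[OF AB'(1)] AB(2) AB'(2)])
       (use L dJ_range[OF L] in auto)
  then show ?thesis using x s by blast
qed

lemma mD1_pt: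
  assumes "fsupp X"
  shows "mD1 N L X (pt N b1 b2 Y1 Y2) = X (pt N b1 b2 (Y1 - int L) Y2) - X (pt N b1 b2 Y1 (Y2 - int L))"
  using assms by (simp add: mD1_app pt_def kk_def algebra_simps)

lemma P5_first_gt:
  assumes L: "L > 0" and gt: "I2 < I1"
  shows "fst (P5J L I1 I2) \<le> I1 \<and> fst (P5J L I1 I2) \<ge> I2"
proof -
  have d: "1 \<le> dJ L I1" "dJ L I1 \<le> int L" "1 \<le> dJ L I2" "dJ L I2 \<le> int L" using dJ_range[OF L] by auto
  have I1: "I1 = dJ L I1 + int L * uJ L I1" and I2: "I2 = dJ L I2 + int L * uJ L I2" using J_decomp[OF L] by auto
  have uo: "uJ L I2 \<le> uJ L I1 \<and> (dJ L I1 \<le> dJ L I2 \<longrightarrow> uJ L I2 < uJ L I1)"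
    using u_order[of "int L", OF _ d] gt I1 I2 L by simp
  have m1: "int L * uJ L I2 \<le> int L * uJ L I1" using uo L by (simp add: mult_left_mono)
  have m2: "dJ L I1 \<le> dJ L I2 \<longrightarrow> int L * uJ L I2 + int L \<le> int L * uJ L I1"
  proof
    assume "dJ L I1 \<le> dJ L I2"
    then have "uJ L I2 + 1 \<le> uJ L I1" using uo by simp
    then have "int L * (uJ L I2 + 1) \<le> int L * uJ L I1" using L by (simp add: mult_left_mono)
    then show "int L * uJ L I2 + int L \<le> int L * uJ L I1" by (simp add: algebra_simps)
  qed
  show ?thesis
  proof (cases "dJ L I1 > dJ L I2")
    case True
    then have "fst (P5J L I1 I2) = dJ L I1 + int L * uJ L I2" unfolding P5J_def by simp
    then show ?thesis using d m1 m2 I1 I2 True by linarith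
  next
    case False
    then have "fst (P5J L I1 I2) = dJ L I1 + int L * uJ L I2 + int L" unfolding P5J_def by simp
    then show ?thesis using d m1 m2 I1 I2 False by linarith
  qed
qed

lemma P5_first_lt:
  assumes L: "L > 0" and lt: "I1 < I2" and ne: "dJ L I1 \<noteq> dJ L I2"
  shows "fst (P5J L I1 I2) \<noteq> I2 + int L"
proof -
  have d: "1 \<le> dJ L I1" "dJ L I1 \<le> int L" "1 \<le> dJ L I2" "dJ L I2 \<le> int L" using dJ_range[OF L] by auto
  have I2: "I2 = dJ L I2 + int L * uJ L I2" using J_decomp[OF L] by auto
  show ?thesis
  proof (cases "dJ L I1 > dJ L I2")
    case True
    then have "fst (P5J L I1 I2) = dJ L I1 + int L * uJ L I2" unfolding P5J_def by simp
    then show ?thesis using d I2 True by linarith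
  next
    case False
    then have "fst (P5J L I1 I2) = dJ L I1 + int L * uJ L I2 + int L" unfolding P5J_def by simp
    then show ?thesis using d I2 False ne by linarith
  qed
qed

lemma Tt_val_gt:
  assumes N: "N > 0" and L: "L > 0" and b1: "1 \<le> b1" "b1 \<le> int N" and b2: "1 \<le> b2" "b2 \<le> int N"
    and gt: "I2 < I1"
  shows "Tt N L (pt N b1 b2 I1 I2) (pt N b1 b2 I1 I2) = 1"
proof -
  let ?X = "Tt N L (pt N b1 b2 I1 I2)"
  have TP: "fsupp ?X" "mD1 N L ?X = Phi N L (bv (pt N b1 b2 I1 I2))" using Tt_props[OF N L b1 b2] by auto
  have z: "?X (pt N b1 b2 (I1 + int L) (I2 - int L)) = 0"
  proof (rule ccontr)
    assume "?X (pt N b1 b2 (I1 + int L) (I2 - int L)) \<noteq> 0"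
    then obtain Y1 Y2 where "pt N b1 b2 (I1 + int L) (I2 - int L) = pt N b1 b2 Y1 Y2" "Y1 \<le> I1"
      using Xsupp_gt[OF N L b1 b2 gt] by blast
    then show False using N L by simp
  qed
  have P5: "fst (P5J L I1 I2) \<le> I1" using P5_first_gt[OF L gt] by simp
  have "Phi N L (bv (pt N b1 b2 I1 I2)) (pt N b1 b2 (I1 + int L) I2) = 1"
    unfolding Phi_bv[OF N L b1 b2] P5_P5J using N L gt P5 by (auto simp: bv_def)
  moreover have "mD1 N L ?X (pt N b1 b2 (I1 + int L) I2) = ?X (pt N b1 b2 I1 I2)"
    using z TP(1) by (simp add: mD1_pt)
  ultimately show ?thesis using TP(2) by simp
qed

lemma Tt_val_lt:
  assumes N: "N > 0" and L: "L > 0" and b1: "1 \<le> b1" "b1 \<le> int N" and b2: "1 \<le> b2" "b2 \<le> int N"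
    and lt: "I1 < I2"
  shows "Tt N L (pt N b1 b2 I1 I2) (pt N b1 b2 I2 I1) \<noteq> 0"
proof -
  let ?X = "Tt N L (pt N b1 b2 I1 I2)"
  have TP: "fsupp ?X" "mD1 N L ?X = Phi N L (bv (pt N b1 b2 I1 I2))" using Tt_props[OF N L b1 b2] by auto
  have z: "?X (pt N b1 b2 (I2 + int L) (I1 - int L)) = 0"
  proof (rule ccontr)
    assume "?X (pt N b1 b2 (I2 + int L) (I1 - int L)) \<noteq> 0"
    then obtain Y1 Y2 where "pt N b1 b2 (I2 + int L) (I1 - int L) = pt N b1 b2 Y1 Y2" "Y1 \<le> I2"
      using Xsupp_lt[OF N L b1 b2 lt] by blast
    then show False using N L by simp
  qed
  have "Phi N L (bv (pt N b1 b2 I1 I2)) (pt N b1 b2 (I2 + int L) I1) \<noteq> 0"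
  proof (cases "dJ L I1 = dJ L I2")
    case True
    then show ?thesis unfolding Phi_bv[OF N L b1 b2] using N L lt by (auto simp: bv_def)
  next
    case False
    have P5: "fst (P5J L I1 I2) \<noteq> I2 + int L" using P5_first_lt[OF L lt False] .
    have "P5 N L b1 b2 I1 I2 \<noteq> pt N b1 b2 (I2 + int L) I1"
      unfolding P5_P5J using N P5 by simp
    then show ?thesis unfolding Phi_bv[OF N L b1 b2] using N L lt False qq_nz[of N] by (auto simp: bv_def)
  qed
  moreover have "mD1 N L ?X (pt N b1 b2 (I2 + int L) I1) = ?X (pt N b1 b2 I2 I1)"
    using z TP(1) by (simp add: mD1_pt)
  ultimately show ?thesis using TP(2) by simp
qed


lemma CT_gt:
  assumes N: "N > 0" and L: "L > 0" and b1: "1 \<le> b1" "b1 \<le> int N" and b2: "1 \<le> b2" "b2 \<le> int N"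
    and gt: "I2 < I1" and nz: "cT N L (bv (pt N b1 b2 I1 I2)) x \<noteq> 0"
  shows "\<exists>Y1 Y2. x = pt N b1 b2 Y1 Y2 \<and> Y1 + Y2 = I1 + I2 \<and> I2 \<le> Y1 \<and> Y1 < I1 \<and>
     (Y1 = I2 \<or> (\<exists>i\<ge>1. Y1 = I1 - i * int L))"
proof -
  let ?p = "pt N b1 b2 I1 I2"
  have C: "cT N L (bv ?p) x = Tt N L ?p x - bv ?p x" using cT_Tt[OF N L b1 b2] by (simp add: vsub_app)
  have xp: "x \<noteq> ?p"
  proof
    assume "x = ?p"
    then have "cT N L (bv ?p) x = 0" using C Tt_val_gt[OF N L b1 b2 gt] by (simp add: bv_def)
    then show False using nz by simp
  qed
  then have "Tt N L ?p x \<noteq> 0" using C nz by (simp add: bv_def)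
  then obtain Y1 Y2 where Y: "x = pt N b1 b2 Y1 Y2" "Y1 + Y2 = I1 + I2" "I2 \<le> Y1" "Y1 \<le> I1"
     "Y1 = I2 \<or> Y1 = I1 \<or> (\<exists>i\<ge>1. Y1 = I1 - i * int L)"
    using Xsupp_gt[OF N L b1 b2 gt] by blast
  have "Y1 \<noteq> I1"
  proof
    assume "Y1 = I1"
    then have "Y2 = I2" using Y(2) by simp
    then show False using xp Y(1) \<open>Y1 = I1\<close> by simp
  qed
  then show ?thesis using Y by (intro exI[of _ Y1] exI[of _ Y2]) auto
qed

lemma CT_lt:
  assumes N: "N > 0" and L: "L > 0" and b1: "1 \<le> b1" "b1 \<le> int N" and b2: "1 \<le> b2" "b2 \<le> int N"
    and lt: "I1 < I2" and nz: "cT N L (bv (pt N b1 b2 I1 I2)) x \<noteq> 0"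
  shows "\<exists>Y1 Y2. x = pt N b1 b2 Y1 Y2 \<and> Y1 + Y2 = I1 + I2 \<and> I1 \<le> Y1 \<and> Y1 \<le> I2"
proof (cases "x = pt N b1 b2 I1 I2")
  case True
  then show ?thesis using lt by (intro exI[of _ I1] exI[of _ I2]) auto
next
  case False
  let ?p = "pt N b1 b2 I1 I2"
  have C: "cT N L (bv ?p) x = Tt N L ?p x - bv ?p x" using cT_Tt[OF N L b1 b2] by (simp add: vsub_app)
  then have "Tt N L ?p x \<noteq> 0" using False nz by (simp add: bv_def)
  then show ?thesis using Xsupp_lt[OF N L b1 b2 lt] by blast
qed

lemma CT_lt_val:
  assumes N: "N > 0" and L: "L > 0" and b1: "1 \<le> b1" "b1 \<le> int N" and b2: "1 \<le> b2" "b2 \<le> int N"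
    and lt: "I1 < I2"
  shows "cT N L (bv (pt N b1 b2 I1 I2)) (pt N b1 b2 I2 I1) \<noteq> 0"
proof -
  let ?p = "pt N b1 b2 I1 I2"
  have C: "cT N L (bv ?p) (pt N b1 b2 I2 I1) = Tt N L ?p (pt N b1 b2 I2 I1) - bv ?p (pt N b1 b2 I2 I1)"
    using cT_Tt[OF N L b1 b2] by (simp add: vsub_app)
  have "bv ?p (pt N b1 b2 I2 I1) = 0" using lt N by (simp add: bv_def)
  then show ?thesis using C Tt_val_lt[OF N L b1 b2 lt] by simp
qed

lemma CT_eq:
  assumes N: "N > 0" and L: "L > 0" and b1: "1 \<le> b1" "b1 \<le> int N" and b2: "1 \<le> b2" "b2 \<le> int N"
  shows "cT N L (bv (pt N b1 b2 I I)) = vsc (-1) (bv (pt N b1 b2 I I))"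
proof -
  have "Phi N L (bv (pt N b1 b2 I I)) = (\<lambda>x. 0)"
    unfolding Phi_bv[OF N L b1 b2] by (simp add: fun_eq_iff)
  moreover have "mD1 N L (\<lambda>x. 0) = (\<lambda>x. 0)" by (simp add: fun_eq_iff mD1_app)
  ultimately have "cT N L (bv (pt N b1 b2 I I)) = vsub (\<lambda>x. 0) (bv (pt N b1 b2 I I))"
    by (intro cT_char[OF N L]) auto
  then show ?thesis by (simp add: fun_eq_iff vsub_app vsc_app)
qed



definition W :: "nat \<Rightarrow> nat \<Rightarrow> vec set" where
  "W N L = {v. \<exists>g X. fsupp g \<and> fsupp X \<and> mD1 N L X = Phi N L g \<and> v = vsub (vsub X g) (sT N L g)}"

lemma W_relIm:
  assumes N: "N > 0" and L: "L > 0" and v: "v \<in> W N L"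
  shows "v \<in> relIm N L"
proof -
  obtain g X where 1: "fsupp g" "fsupp X" "mD1 N L X = Phi N L g" "v = vsub (vsub X g) (sT N L g)"
    using v unfolding W_def by blast
  have "cT N L g = vsub X g" using cT_char[OF N L 1(1) 1(2) 1(3)] .
  then have "v = vsub (cT N L g) (sT N L g)" using 1(4) by simp
  then show ?thesis unfolding relIm_def using 1(1) by blast
qed

lemma fsupp_sTb[simp]: "fsupp (sTb N L p)"
  unfolding sTb_def Let_def by simp

lemma fsupp_sT[simp]: "fsupp g \<Longrightarrow> fsupp (sT N L g)"
  unfolding sT_def by (rule fsupp_lin) simp_all

lemma SS_app: "N > 0 \<Longrightarrow> L > 0 \<Longrightarrow> fsupp f \<Longrightarrow> SS N L f x = f (swapZE N L x)"
  by (simp add: SS_eq)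

lemma Phi_vadd:
  assumes N: "N > 0" and L: "L > 0" and g1: "fsupp g1" and g2: "fsupp g2"
  shows "Phi N L (vadd g1 g2) = vadd (Phi N L g1) (Phi N L g2)"
proof -
  have RR: "RR N L (vadd g1 g2) = vadd (RR N L g1) (RR N L g2)" unfolding RR_def using lin_vadd g1 g2 by blast
  have "Phi N L (vadd g1 g2) x = vadd (Phi N L g1) (Phi N L g2) x" for x
    unfolding Phi_def RR using N L g1 g2
    by (simp add: SS_app Z1_app Z2_app vadd_app vsub_app vsc_app algebra_simps)
  then show ?thesis by blast
qed

lemma Phi_vsc:
  assumes N: "N > 0" and L: "L > 0" and g: "fsupp g"
  shows "Phi N L (vsc a g) = vsc a (Phi N L g)"
proof -
  have RR: "RR N L (vsc a g) = vsc a (RR N L g)" unfolding RR_def using lin_vsc g by blast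
  have "Phi N L (vsc a g) x = vsc a (Phi N L g) x" for x
    unfolding Phi_def RR using N L g
    by (simp add: SS_app Z1_app Z2_app vadd_app vsub_app vsc_app algebra_simps)
  then show ?thesis by blast
qed

lemma W_add:
  assumes N: "N > 0" and L: "L > 0" and v1: "v1 \<in> W N L" and v2: "v2 \<in> W N L"
  shows "vadd v1 v2 \<in> W N L"
proof -
  obtain g1 X1 where 1: "fsupp g1" "fsupp X1" "mD1 N L X1 = Phi N L g1" "v1 = vsub (vsub X1 g1) (sT N L g1)"
    using v1 unfolding W_def by blast
  obtain g2 X2 where 2: "fsupp g2" "fsupp X2" "mD1 N L X2 = Phi N L g2" "v2 = vsub (vsub X2 g2) (sT N L g2)"
    using v2 unfolding W_def by blast
  have m: "mD1 N L (vadd X1 X2) = Phi N L (vadd g1 g2)"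
    unfolding Phi_vadd[OF N L 1(1) 2(1)] 1(3)[symmetric] 2(3)[symmetric]
    using 1 2 by (simp add: fun_eq_iff mD1_app vadd_app algebra_simps)
  have s: "sT N L (vadd g1 g2) = vadd (sT N L g1) (sT N L g2)" unfolding sT_def using lin_vadd 1 2 by blast
  have "vadd v1 v2 = vsub (vsub (vadd X1 X2) (vadd g1 g2)) (sT N L (vadd g1 g2))"
    unfolding s 1(4) 2(4) by (simp add: fun_eq_iff vadd_app vsub_app algebra_simps)
  then show ?thesis unfolding W_def using 1 2 m by (intro CollectI exI[of _ "vadd g1 g2"] exI[of _ "vadd X1 X2"]) simp
qed

lemma W_sc:
  assumes N: "N > 0" and L: "L > 0" and v: "v \<in> W N L"
  shows "vsc a v \<in> W N L"
proof -
  obtain g X where 1: "fsupp g" "fsupp X" "mD1 N L X = Phi N L g" "v = vsub (vsub X g) (sT N L g)"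
    using v unfolding W_def by blast
  have m: "mD1 N L (vsc a X) = Phi N L (vsc a g)"
    unfolding Phi_vsc[OF N L 1(1)] 1(3)[symmetric]
    using 1 by (simp add: fun_eq_iff mD1_app vsc_app algebra_simps)
  have s: "sT N L (vsc a g) = vsc a (sT N L g)" unfolding sT_def using lin_vsc 1 by blast
  have "vsc a v = vsub (vsub (vsc a X) (vsc a g)) (sT N L (vsc a g))"
    unfolding s 1(4) by (simp add: fun_eq_iff vsc_app vsub_app algebra_simps)
  then show ?thesis unfolding W_def using 1 m by (intro CollectI exI[of _ "vsc a g"] exI[of _ "vsc a X"]) simp
qed

lemma W_zero: "N > 0 \<Longrightarrow> L > 0 \<Longrightarrow> (\<lambda>x. 0) \<in> W N L"
proof -
  assume N: "N > 0" and L: "L > 0"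
  have R: "RR N L (\<lambda>x. 0) = (\<lambda>x. 0)" unfolding RR_def by (rule lin_zero)
  have S: "sT N L (\<lambda>x. 0) = (\<lambda>x. 0)" unfolding sT_def by (rule lin_zero)
  have "Phi N L (\<lambda>x. 0) x = 0" for x unfolding Phi_def R using N L
    by (simp add: SS_app Z1_app Z2_app vadd_app vsub_app vsc_app)
  then have P: "Phi N L (\<lambda>x. 0) = (\<lambda>x. 0)" by blast
  have M: "mD1 N L (\<lambda>x. 0) = (\<lambda>x. 0)" by (simp add: fun_eq_iff mD1_app)
  show ?thesis unfolding W_def
    by (intro CollectI exI[of _ "\<lambda>x. 0"]) (simp add: P M S fun_eq_iff vsub_app)
qed

lemma W_sub:
  assumes N: "N > 0" and L: "L > 0" and v1: "v1 \<in> W N L" and v2: "v2 \<in> W N L"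
  shows "vsub v1 v2 \<in> W N L"
proof -
  have "vadd v1 (vsc (-1) v2) \<in> W N L" using W_add[OF N L v1 W_sc[OF N L v2]] .
  moreover have "vadd v1 (vsc (-1) v2) = vsub v1 v2" by (simp add: fun_eq_iff vadd_app vsc_app vsub_app)
  ultimately show ?thesis by simp
qed

lemma W_rel:
  assumes N: "N > 0" and L: "L > 0" and b1: "1 \<le> b1" "b1 \<le> int N" and b2: "1 \<le> b2" "b2 \<le> int N"
  shows "vsub (cT N L (bv (pt N b1 b2 I1 I2))) (sTb N L (pt N b1 b2 I1 I2)) \<in> W N L"
proof -
  let ?p = "pt N b1 b2 I1 I2"
  have "vsub (cT N L (bv ?p)) (sTb N L ?p) = vsub (vsub (Tt N L ?p) (bv ?p)) (sT N L (bv ?p))"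
    unfolding cT_Tt[OF N L b1 b2] sT_def lin_bv ..
  then show ?thesis unfolding W_def using Tt_props[OF N L b1 b2, of I1 I2]
    by (intro CollectI exI[of _ "bv ?p"] exI[of _ "Tt N L ?p"]) simp
qed

lemma sTb_same:
  assumes N: "N > 0" and L: "L > 0" and b: "1 \<le> b" "b \<le> int N"
  shows "sTb N L (pt N b b Y1 Y2) = vsc (qq N ^ 2) (bv (pt N b b Y1 Y2))"
  unfolding sTb_def Let_def using kbar_pt1[OF b] kbar_pt2[OF b] by simp

lemma sTb_lohi:
  assumes N: "N > 0" and L: "L > 0" and b1: "1 \<le> b1" "b1 \<le> int N" and b2: "1 \<le> b2" "b2 \<le> int N"
    and lt: "b1 < b2"
  shows "sTb N L (pt N b1 b2 Y1 Y2) = vsc (qq N) (bv (pt N b2 b1 Y1 Y2))"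
  unfolding sTb_def Let_def using kbar_pt1[OF b1] kbar_pt2[OF b2] lt swapbar_pt[OF N L b1 b2] by simp



definition GC :: "nat \<Rightarrow> nat \<Rightarrow> (int \<times> int) set \<Rightarrow> vec \<Rightarrow> bool" where
  "GC N L G v \<longleftrightarrow> (\<exists>c. fsupp c \<and> (\<forall>p. c p \<noteq> 0 \<longrightarrow> p \<in> G) \<and> vsub v c \<in> W N L)"

context
  fixes N L :: nat
  assumes N: "N > 0" and L: "L > 0"
begin

lemma GC_bv: "p \<in> G \<Longrightarrow> GC N L G (bv p)"
proof -
  assume p: "p \<in> G"
  have "vsub (bv p) (bv p) = (\<lambda>x. 0)" by (simp add: fun_eq_iff vsub_app)
  moreover have "\<forall>x. bv p x \<noteq> 0 \<longrightarrow> x \<in> G" using p by (simp add: bv_def)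
  ultimately show ?thesis unfolding GC_def using W_zero[OF N L] fsupp_bv by metis
qed

lemma GC_W: "v \<in> W N L \<Longrightarrow> GC N L G v"
  unfolding GC_def
  apply (intro exI[of _ "\<lambda>x. 0"])
  by (auto simp: vsub_def)

lemma GC_add: "GC N L G v1 \<Longrightarrow> GC N L G v2 \<Longrightarrow> GC N L G (vadd v1 v2)"
proof -
  assume "GC N L G v1" "GC N L G v2"
  then obtain c1 c2 where c: "fsupp c1" "\<forall>p. c1 p \<noteq> 0 \<longrightarrow> p \<in> G" "vsub v1 c1 \<in> W N L"
    "fsupp c2" "\<forall>p. c2 p \<noteq> 0 \<longrightarrow> p \<in> G" "vsub v2 c2 \<in> W N L" unfolding GC_def by blast
  have "vsub (vadd v1 v2) (vadd c1 c2) = vadd (vsub v1 c1) (vsub v2 c2)"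
    by (simp add: fun_eq_iff vadd_app vsub_app)
  then have "vsub (vadd v1 v2) (vadd c1 c2) \<in> W N L" using W_add[OF N L c(3) c(6)] by simp
  moreover have "\<forall>p. vadd c1 c2 p \<noteq> 0 \<longrightarrow> p \<in> G"
  proof (intro allI impI)
    fix p assume "vadd c1 c2 p \<noteq> 0"
    then have "c1 p \<noteq> 0 \<or> c2 p \<noteq> 0" by (auto simp: vadd_app)
    then show "p \<in> G" using c(2) c(5) by blast
  qed
  ultimately show ?thesis unfolding GC_def using c by (intro exI[of _ "vadd c1 c2"]) simp
qed

lemma GC_sc: "GC N L G v \<Longrightarrow> GC N L G (vsc a v)"
proof -
  assume "GC N L G v"
  then obtain c where c: "fsupp c" "\<forall>p. c p \<noteq> 0 \<longrightarrow> p \<in> G" "vsub v c \<in> W N L" unfolding GC_def by blast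
  have "vsub (vsc a v) (vsc a c) = vsc a (vsub v c)"
    by (simp add: fun_eq_iff vsc_app vsub_app algebra_simps)
  then have "vsub (vsc a v) (vsc a c) \<in> W N L" using W_sc[OF N L c(3)] by simp
  moreover have "\<forall>p. vsc a c p \<noteq> 0 \<longrightarrow> p \<in> G" using c by (auto simp: vsc_app)
  ultimately show ?thesis unfolding GC_def using c by (intro exI[of _ "vsc a c"]) simp
qed

lemma GC_mono: "G \<subseteq> G' \<Longrightarrow> GC N L G v \<Longrightarrow> GC N L G' v"
  unfolding GC_def by blast

lemma GC_cong: "GC N L G w \<Longrightarrow> vsub v w \<in> W N L \<Longrightarrow> GC N L G v"
proof -
  assume "GC N L G w" and vw: "vsub v w \<in> W N L"
  then obtain c where c: "fsupp c" "\<forall>p. c p \<noteq> 0 \<longrightarrow> p \<in> G" "vsub w c \<in> W N L" unfolding GC_def by blast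
  have "vsub v c = vadd (vsub v w) (vsub w c)" by (simp add: fun_eq_iff vadd_app vsub_app)
  then have "vsub v c \<in> W N L" using W_add[OF N L vw c(3)] by simp
  then show ?thesis unfolding GC_def using c by blast
qed

lemma GC_sum_aux:
  assumes "finite S"
  shows "(\<forall>p\<in>S. GC N L G (bv p)) \<Longrightarrow> {p. w p \<noteq> 0} \<subseteq> S \<Longrightarrow> GC N L G w"
  using assms
proof (induction S arbitrary: w rule: finite_induct)
  case empty
  then have "w = (\<lambda>x. 0)" by auto
  then show ?case using GC_W[OF W_zero[OF N L]] by simp
next
  case (insert a S)
  let ?w' = "w(a := 0)"
  have "{p. ?w' p \<noteq> 0} \<subseteq> S" using insert.prems by auto
  then have "GC N L G ?w'" using insert.IH insert.prems by blast
  moreover have "GC N L G (vsc (w a) (bv a))" using insert.prems GC_sc by blast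
  ultimately have "GC N L G (vadd (vsc (w a) (bv a)) ?w')" using GC_add by blast
  moreover have "vadd (vsc (w a) (bv a)) ?w' = w" by (simp add: fun_eq_iff vadd_app vsc_app bv_def)
  ultimately show ?case by simp
qed

lemma GC_sum: "fsupp w \<Longrightarrow> (\<And>p. w p \<noteq> 0 \<Longrightarrow> GC N L G (bv p)) \<Longrightarrow> GC N L G w"
  using GC_sum_aux[of "{p. w p \<noteq> 0}" G w] unfolding fsupp_def by blast

end

lemma kk_lt_same: "N > 0 \<Longrightarrow> kk N b Y2 < kk N b Y1 \<longleftrightarrow> Y1 < Y2"
  unfolding kk_def by simp

lemma kk_lt_diff:
  assumes N: "N > 0" and b: "1 \<le> b" "b \<le> int N" and b': "1 \<le> b'" "b' \<le> int N" and lt: "Y1 < Y2"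
  shows "kk N b' Y2 < kk N b Y1"
proof -
  have "int N * (Y1 + 1) \<le> int N * Y2" using lt N by (intro mult_left_mono) auto
  then show ?thesis unfolding kk_def using b b' by (simp add: algebra_simps)
qed

lemma kk_le:
  assumes N: "N > 0" and le: "Y1 \<le> Y2" and bb: "b' \<le> b"
  shows "kk N b' Y2 \<le> kk N b Y1"
proof -
  have "int N * Y1 \<le> int N * Y2" using le N by (intro mult_left_mono) auto
  then show ?thesis unfolding kk_def using bb by simp
qed



definition GE :: "nat \<Rightarrow> int \<Rightarrow> int \<Rightarrow> int \<Rightarrow> (int \<times> int) set" where
  "GE N b I1 I2 = {(\<alpha>, \<beta>). \<beta> < \<alpha> \<and> kbar N \<beta> = b \<and> I2 \<le> kt N \<beta> \<and> kt N \<beta> \<le> I1}"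

lemma fsupp_cT_bv:
  assumes N: "N > 0" and L: "L > 0" and b1: "1 \<le> b1" "b1 \<le> int N" and b2: "1 \<le> b2" "b2 \<le> int N"
  shows "fsupp (cT N L (bv (pt N b1 b2 I1 I2)))"
  using cT_Tt[OF N L b1 b2] Tt_props[OF N L b1 b2] by simp

lemma strE:
  assumes N: "N > 0" and L: "L > 0" and b: "1 \<le> b" "b \<le> int N"
  shows "I2 \<le> I1 \<Longrightarrow> GC N L (GE N b I1 I2) (bv (pt N b b I1 I2))"
proof (induction "nat (I1 - I2)" arbitrary: I1 I2 rule: less_induct)
  case less
  let ?p = "pt N b b I1 I2"
  let ?q = "qq N"
  have rel: "vsub (cT N L (bv ?p)) (sTb N L ?p) \<in> W N L" by (rule W_rel[OF N L b b])
  show ?case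
  proof (cases "I1 = I2")
    case True
    have "vsub (cT N L (bv ?p)) (sTb N L ?p) = vsc (- (1 + ?q ^ 2)) (bv ?p)"
      unfolding True CT_eq[OF N L b b] sTb_same[OF N L b]
      by (simp add: fun_eq_iff vsub_app vsc_app algebra_simps)
    then have "vsc (inverse (- (1 + ?q ^ 2))) (vsc (- (1 + ?q ^ 2)) (bv ?p)) \<in> W N L"
      using rel W_sc[OF N L] by metis
    moreover have "vsc (inverse (- (1 + ?q ^ 2))) (vsc (- (1 + ?q ^ 2)) (bv ?p)) = bv ?p"
      using one_qq2_nz[of N] by (simp add: fun_eq_iff vsc_app)
    ultimately show ?thesis using GC_W[OF N L] by metis
  next
    case False
    then have lt: "I2 < I1" using less.prems by simp
    have e: "vsub (bv ?p) (vsc (inverse (?q ^ 2)) (cT N L (bv ?p))) =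
             vsc (- inverse (?q ^ 2)) (vsub (cT N L (bv ?p)) (sTb N L ?p))"
      unfolding sTb_same[OF N L b] using qq2_nz[of N]
      by (simp add: fun_eq_iff vsub_app vsc_app field_simps)
    have eW: "vsub (bv ?p) (vsc (inverse (?q ^ 2)) (cT N L (bv ?p))) \<in> W N L"
      unfolding e by (rule W_sc[OF N L rel])
    have GCc: "GC N L (GE N b I1 I2) (cT N L (bv ?p))"
    proof (rule GC_sum[OF N L fsupp_cT_bv[OF N L b b]])
      fix z assume "cT N L (bv ?p) z \<noteq> 0"
      then obtain Y1 Y2 where Y: "z = pt N b b Y1 Y2" "Y1 + Y2 = I1 + I2" "I2 \<le> Y1" "Y1 < I1"
        using CT_gt[OF N L b b lt] by blast
      show "GC N L (GE N b I1 I2) (bv z)"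
      proof (cases "Y1 < Y2")
        case True
        have "z \<in> GE N b I1 I2"
          unfolding Y(1) GE_def pt_def using True Y N b by (simp add: kk_lt_same kbar_kk kt_kk)
        then show ?thesis by (rule GC_bv[OF N L])
      next
        case False
        have "nat (Y1 - Y2) < nat (I1 - I2)" using False Y by simp
        then have "GC N L (GE N b Y1 Y2) (bv (pt N b b Y1 Y2))" using less.hyps False by simp
        moreover have "GE N b Y1 Y2 \<subseteq> GE N b I1 I2" unfolding GE_def using Y by auto
        ultimately show ?thesis using GC_mono[OF N L] Y(1) by metis
      qed
    qed
    show ?thesis by (rule GC_cong[OF N L GC_sc[OF N L GCc] eW])
  qed
qed

definition GD :: "nat \<Rightarrow> int \<Rightarrow> int \<Rightarrow> int \<Rightarrow> int \<Rightarrow> (int \<times> int) set" where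
  "GD N lo hi I1 I2 = {(\<alpha>, \<beta>). \<beta> < \<alpha> \<and> (kbar N \<beta> = lo \<or> kbar N \<beta> = hi) \<and>
     I2 \<le> kt N \<beta> \<and> kt N \<beta> \<le> I1 \<and> kk N lo I1 \<le> \<beta>}"

lemma strD1:
  assumes N: "N > 0" and L: "L > 0" and lo: "1 \<le> lo" "lo \<le> int N" and hi: "1 \<le> hi" "hi \<le> int N"
    and lh: "lo < hi"
  shows "I2 \<le> I1 \<Longrightarrow> GC N L (GD N lo hi I1 I2) (bv (pt N lo hi I1 I2))"
proof (induction "nat (I1 - I2)" arbitrary: I1 I2 rule: less_induct)
  case less
  let ?q = "qq N"
  show ?case
  proof (cases "I1 = I2")
    case True
    let ?p = "pt N lo hi I1 I1"
    let ?y = "pt N hi lo I1 I1"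
    have rel: "vsub (cT N L (bv ?p)) (sTb N L ?p) \<in> W N L" by (rule W_rel[OF N L lo hi])
    have "vsub (bv ?p) (vsc (- ?q) (bv ?y)) = vsc (-1) (vsub (cT N L (bv ?p)) (sTb N L ?p))"
      unfolding CT_eq[OF N L lo hi] sTb_lohi[OF N L lo hi lh]
      by (simp add: fun_eq_iff vsub_app vsc_app algebra_simps)
    then have eW: "vsub (bv ?p) (vsc (- ?q) (bv ?y)) \<in> W N L" using W_sc[OF N L rel] by metis
    have "kk N lo I1 < kk N hi I1" unfolding kk_def using lh by simp
    then have "?y \<in> GD N lo hi I1 I1"
      unfolding GD_def pt_def using lh N lo hi by (simp add: kbar_kk kt_kk)
    then have "GC N L (GD N lo hi I1 I1) (vsc (- ?q) (bv ?y))" using GC_bv[OF N L] GC_sc[OF N L] by blast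
    then show ?thesis using GC_cong[OF N L _ eW] True by simp
  next
    case False
    then have lt: "I2 < I1" using less.prems by simp
    let ?p' = "pt N lo hi I2 I1"
    let ?x = "pt N lo hi I1 I2"
    let ?y = "pt N hi lo I2 I1"
    define c0 where "c0 = cT N L (bv ?p') ?x"
    have c0: "c0 \<noteq> 0" unfolding c0_def by (rule CT_lt_val[OF N L lo hi lt])
    define R where "R = vsub (cT N L (bv ?p')) (vsc c0 (bv ?x))"
    have rel: "vsub (cT N L (bv ?p')) (sTb N L ?p') \<in> W N L" by (rule W_rel[OF N L lo hi])
    have e: "vsub (bv ?x) (vsc (inverse c0) (vsub (vsc ?q (bv ?y)) R)) =
             vsc (inverse c0) (vsub (cT N L (bv ?p')) (sTb N L ?p'))"
      unfolding R_def sTb_lohi[OF N L lo hi lh] using c0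
      by (simp add: fun_eq_iff vsub_app vsc_app field_simps)
    have eW: "vsub (bv ?x) (vsc (inverse c0) (vsub (vsc ?q (bv ?y)) R)) \<in> W N L"
      unfolding e by (rule W_sc[OF N L rel])
    have Gy: "GC N L (GD N lo hi I1 I2) (bv ?y)"
    proof (rule GC_bv[OF N L])
      show "?y \<in> GD N lo hi I1 I2"
        unfolding GD_def pt_def using lt N lo hi by (simp add: kbar_kk kt_kk kk_lt_diff)
    qed
    have fR: "fsupp R" unfolding R_def using fsupp_cT_bv[OF N L lo hi] by simp
    have GR: "GC N L (GD N lo hi I1 I2) R"
    proof (rule GC_sum[OF N L fR])
      fix z assume Rz: "R z \<noteq> 0"
      have zx: "z \<noteq> ?x"
      proof
        assume "z = ?x"
        then have "R z = 0" unfolding R_def c0_def by (simp add: vsub_app vsc_app bv_def)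
        then show False using Rz by simp
      qed
      then have "cT N L (bv ?p') z \<noteq> 0" using Rz unfolding R_def by (simp add: vsub_app vsc_app bv_def)
      then obtain Y1 Y2 where Y: "z = pt N lo hi Y1 Y2" "Y1 + Y2 = I2 + I1" "I2 \<le> Y1" "Y1 \<le> I1"
        using CT_lt[OF N L lo hi lt] by blast
      have Y1ne: "Y1 \<noteq> I1"
      proof
        assume "Y1 = I1"
        then have "Y2 = I2" using Y(2) by simp
        then show False using zx Y(1) \<open>Y1 = I1\<close> by simp
      qed
      show "GC N L (GD N lo hi I1 I2) (bv z)"
      proof (cases "Y1 < Y2")
        case True
        have "z \<in> GD N lo hi I1 I2"
          unfolding Y(1) GD_def pt_def using True Y N lo hi lh
          by (simp add: kbar_kk kt_kk kk_lt_diff kk_le)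
        then show ?thesis by (rule GC_bv[OF N L])
      next
        case False
        have "nat (Y1 - Y2) < nat (I1 - I2)" using False Y Y1ne by simp
        then have "GC N L (GD N lo hi Y1 Y2) (bv (pt N lo hi Y1 Y2))" using less.hyps False by simp
        moreover have "GD N lo hi Y1 Y2 \<subseteq> GD N lo hi I1 I2"
        proof
          fix w assume "w \<in> GD N lo hi Y1 Y2"
          moreover have "kk N lo I1 \<le> kk N lo Y1" using kk_le[OF N Y(4)] by simp
          ultimately show "w \<in> GD N lo hi I1 I2" unfolding GD_def using Y Y1ne by auto
        qed
        ultimately show ?thesis using GC_mono[OF N L] Y(1) by metis
      qed
    qed
    have "GC N L (GD N lo hi I1 I2) (vsub (vsc ?q (bv ?y)) R)"
    proof -
      have "vsub (vsc ?q (bv ?y)) R = vadd (vsc ?q (bv ?y)) (vsc (-1) R)"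
        by (simp add: fun_eq_iff vsub_app vsc_app vadd_app)
      then show ?thesis using GC_add[OF N L GC_sc[OF N L Gy] GC_sc[OF N L GR]] by simp
    qed
    then show ?thesis using GC_cong[OF N L GC_sc[OF N L] eW] by blast
  qed
qed


definition GD2 :: "nat \<Rightarrow> nat \<Rightarrow> int \<Rightarrow> int \<Rightarrow> int \<Rightarrow> int \<Rightarrow> (int \<times> int) set" where
  "GD2 N L lo hi J1 J2 = {(\<alpha>, \<beta>). \<beta> < \<alpha> \<and> kk N hi J1 \<le> \<beta> \<and>
     (\<beta> = kk N hi J1 \<or> ((kbar N \<beta> = lo \<or> kbar N \<beta> = hi) \<and> J2 + int L \<le> kt N \<beta>))}"

lemma strD2:
  assumes N: "N > 0" and L: "L > 0" and lo: "1 \<le> lo" "lo \<le> int N" and hi: "1 \<le> hi" "hi \<le> int N"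
    and lh: "lo < hi" and lt: "J2 < J1"
  shows "GC N L (GD2 N L lo hi J1 J2) (bv (pt N hi lo J1 J2))"
proof -
  let ?q = "qq N"
  let ?p = "pt N lo hi J1 J2"
  let ?x = "pt N hi lo J1 J2"
  have rel: "vsub (cT N L (bv ?p)) (sTb N L ?p) \<in> W N L" by (rule W_rel[OF N L lo hi])
  have e: "vsub (bv ?x) (vsc (inverse ?q) (cT N L (bv ?p))) =
           vsc (- inverse ?q) (vsub (cT N L (bv ?p)) (sTb N L ?p))"
    unfolding sTb_lohi[OF N L lo hi lh] using qq_nz[of N]
    by (simp add: fun_eq_iff vsub_app vsc_app field_simps)
  have eW: "vsub (bv ?x) (vsc (inverse ?q) (cT N L (bv ?p))) \<in> W N L"
    unfolding e by (rule W_sc[OF N L rel])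
  have GCc: "GC N L (GD2 N L lo hi J1 J2) (cT N L (bv ?p))"
  proof (rule GC_sum[OF N L fsupp_cT_bv[OF N L lo hi]])
    fix z assume "cT N L (bv ?p) z \<noteq> 0"
    then obtain Y1 Y2 where Y: "z = pt N lo hi Y1 Y2" "Y1 + Y2 = J1 + J2" "J2 \<le> Y1" "Y1 < J1"
      "Y1 = J2 \<or> (\<exists>i\<ge>1. Y1 = J1 - i * int L)"
      using CT_gt[OF N L lo hi lt] by blast
    show "GC N L (GD2 N L lo hi J1 J2) (bv z)"
    proof (cases "Y1 = J2")
      case True
      then have "Y2 = J1" using Y(2) by simp
      have "z \<in> GD2 N L lo hi J1 J2"
        unfolding Y(1) GD2_def pt_def using True \<open>Y2 = J1\<close> lt N lo hi
        by (simp add: kk_lt_diff)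
      then show ?thesis by (rule GC_bv[OF N L])
    next
      case False
      then obtain i where i: "i \<ge> 1" "Y1 = J1 - i * int L" using Y(5) by blast
      have "i * int L \<ge> 1 * int L" using i(1) by (intro mult_right_mono) auto
      then have Y2b: "Y2 \<ge> J2 + int L" using Y(2) i(2) by simp
      have Y2le: "Y2 \<le> J1" using Y(2,3) by simp
      show ?thesis
      proof (cases "Y1 < Y2")
        case True
        have "z \<in> GD2 N L lo hi J1 J2"
          unfolding Y(1) GD2_def pt_def using True Y2b Y2le N lo hi
          by (simp add: kk_lt_diff kk_le kbar_kk kt_kk)
        then show ?thesis by (rule GC_bv[OF N L])
      next
        case F2: False
        have "GC N L (GD N lo hi Y1 Y2) (bv (pt N lo hi Y1 Y2))"
          using strD1[OF N L lo hi lh] F2 by simp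
        moreover have "GD N lo hi Y1 Y2 \<subseteq> GD2 N L lo hi J1 J2"
        proof
          fix w assume w: "w \<in> GD N lo hi Y1 Y2"
          obtain \<alpha> \<beta> where wab: "w = (\<alpha>, \<beta>)" by (cases w)
          have hw: "\<beta> < \<alpha>" "kbar N \<beta> = lo \<or> kbar N \<beta> = hi" "Y2 \<le> kt N \<beta>" "kt N \<beta> \<le> Y1"
            using w unfolding wab GD_def by auto
          have "kk N hi J1 < kk N (kbar N \<beta>) (kt N \<beta>)"
            using kk_lt_diff[OF N _ _ hi, of "kbar N \<beta>" "kt N \<beta>" J1] kbar_range[OF N, of \<beta>] hw(4) Y(4) by auto
          then have "kk N hi J1 < \<beta>" using kk_decomp[OF N] by simp
          then show "w \<in> GD2 N L lo hi J1 J2"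
            unfolding wab GD2_def using hw Y2b by auto
        qed
        ultimately show ?thesis using GC_mono[OF N L] Y(1) by metis
      qed
    qed
  qed
  show ?thesis by (rule GC_cong[OF N L GC_sc[OF N L GCc] eW])
qed


lemma straighten:
  fixes mf :: "int \<Rightarrow> int"
  assumes N: "N > 0" and L: "L > 0"
    and mono: "\<And>x y. 1 \<le> x \<Longrightarrow> x \<le> y \<Longrightarrow> y \<le> int N \<Longrightarrow> mf x \<le> mf y \<and> mf y \<le> mf x + int L"
    and lt: "k1 < k2" and P1: "kt N k1 \<ge> mf (kbar N k1)" and P2: "kt N k2 \<ge> mf (kbar N k2)"
  shows "GC N L {(\<alpha>, \<beta>). \<beta> < \<alpha> \<and> k1 \<le> \<beta> \<and> kt N \<beta> \<ge> mf (kbar N \<beta>)} (bv (k1, k2))"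
proof -
  define b1 where "b1 = kbar N k1"
  define b2 where "b2 = kbar N k2"
  define J1 where "J1 = kt N k1"
  define J2 where "J2 = kt N k2"
  have b1: "1 \<le> b1" "b1 \<le> int N" using kbar_range[OF N] b1_def by auto
  have b2: "1 \<le> b2" "b2 \<le> int N" using kbar_range[OF N] b2_def by auto
  have k1: "k1 = kk N b1 J1" using kk_decomp[OF N] b1_def J1_def by simp
  have k2: "k2 = kk N b2 J2" using kk_decomp[OF N] b2_def J2_def by simp
  have kp: "(k1, k2) = pt N b1 b2 J1 J2" unfolding pt_def k1 k2 ..
  have P1': "J1 \<ge> mf b1" using P1 b1_def J1_def by simp
  have P2': "J2 \<ge> mf b2" using P2 b2_def J2_def by simp
  let ?T = "{(\<alpha>, \<beta>). \<beta> < \<alpha> \<and> k1 \<le> \<beta> \<and> kt N \<beta> \<ge> mf (kbar N \<beta>)}"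
  have kkb: "\<beta> = kk N (kbar N \<beta>) (kt N \<beta>)" for \<beta> using kk_decomp[OF N] by simp
  consider (eq) "b1 = b2" | (lh) "b1 < b2" | (hl) "b2 < b1" by linarith
  then show ?thesis
  proof cases
    case eq
    have "J2 < J1" using lt unfolding k1 k2 eq kk_def by (simp add: mult_less_cancel_left)
    then have G: "GC N L (GE N b1 J1 J2) (bv (pt N b1 b1 J1 J2))" using strE[OF N L b1] by simp
    have "GE N b1 J1 J2 \<subseteq> ?T"
    proof
      fix w assume w: "w \<in> GE N b1 J1 J2"
      obtain \<alpha> \<beta> where wab: "w = (\<alpha>, \<beta>)" by (cases w)
      have hw: "\<beta> < \<alpha>" "kbar N \<beta> = b1" "J2 \<le> kt N \<beta>" "kt N \<beta> \<le> J1" using w unfolding wab GE_def by auto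
      have "k1 \<le> \<beta>" using kk_le[OF N hw(4), of b1 b1] kkb[of \<beta>] hw(2) k1 by simp
      moreover have "kt N \<beta> \<ge> mf (kbar N \<beta>)" using hw P1' P2' eq by simp
      ultimately show "w \<in> ?T" unfolding wab using hw by simp
    qed
    then have "GC N L ?T (bv (pt N b1 b1 J1 J2))" by (rule GC_mono[OF N L _ G])
    then show ?thesis unfolding kp eq .
  next
    case lh
    have "J2 \<le> J1"
    proof (rule ccontr)
      assume "\<not> J2 \<le> J1"
      then have "J1 < J2" by simp
      then have "kk N b2 J2 < kk N b1 J1" using kk_lt_diff[OF N b1 b2] by blast
      then show False using lt k1 k2 by simp
    qed
    then have G: "GC N L (GD N b1 b2 J1 J2) (bv (pt N b1 b2 J1 J2))" using strD1[OF N L b1 b2 lh] by simp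
    have m12: "mf b1 \<le> mf b2" using mono[OF b1(1) _ b2(2)] lh by simp
    have "GD N b1 b2 J1 J2 \<subseteq> ?T"
    proof
      fix w assume w: "w \<in> GD N b1 b2 J1 J2"
      obtain \<alpha> \<beta> where wab: "w = (\<alpha>, \<beta>)" by (cases w)
      have hw: "\<beta> < \<alpha>" "kbar N \<beta> = b1 \<or> kbar N \<beta> = b2" "J2 \<le> kt N \<beta>" "kt N \<beta> \<le> J1" "kk N b1 J1 \<le> \<beta>"
        using w unfolding wab GD_def by auto
      have "kt N \<beta> \<ge> mf (kbar N \<beta>)" using hw P2' m12 by auto
      then show "w \<in> ?T" unfolding wab using hw k1 by simp
    qed
    then have "GC N L ?T (bv (pt N b1 b2 J1 J2))" by (rule GC_mono[OF N L _ G])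
    then show ?thesis unfolding kp .
  next
    case hl
    have "J2 < J1"
    proof (rule ccontr)
      assume "\<not> J2 < J1"
      then have "J1 \<le> J2" by simp
      then have "kk N b2 J2 \<le> kk N b1 J1" using kk_le[OF N] hl by simp
      then show False using lt k1 k2 by simp
    qed
    then have G: "GC N L (GD2 N L b2 b1 J1 J2) (bv (pt N b1 b2 J1 J2))" using strD2[OF N L b2 b1 hl] by simp
    have m21: "mf b2 \<le> mf b1" "mf b1 \<le> mf b2 + int L" using mono[OF b2(1) _ b1(2)] hl by auto
    have "GD2 N L b2 b1 J1 J2 \<subseteq> ?T"
    proof
      fix w assume w: "w \<in> GD2 N L b2 b1 J1 J2"
      obtain \<alpha> \<beta> where wab: "w = (\<alpha>, \<beta>)" by (cases w)
      have hw: "\<beta> < \<alpha>" "kk N b1 J1 \<le> \<beta>"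
        "\<beta> = kk N b1 J1 \<or> ((kbar N \<beta> = b2 \<or> kbar N \<beta> = b1) \<and> J2 + int L \<le> kt N \<beta>)"
        using w unfolding wab GD2_def by auto
      have "kt N \<beta> \<ge> mf (kbar N \<beta>)"
      proof (cases "\<beta> = kk N b1 J1")
        case True then show ?thesis using P1 k1 by simp
      next
        case False then show ?thesis using hw(3) P2' m21 by auto
      qed
      then show "w \<in> ?T" unfolding wab using hw k1 by simp
    qed
    then have "GC N L ?T (bv (pt N b1 b2 J1 J2))" by (rule GC_mono[OF N L _ G])
    then show ?thesis unfolding kp .
  qed
qed



lemma double_sum:
  fixes f :: "nat \<Rightarrow> int"
  shows "(\<Sum>k\<in>{1..n}. \<Sum>j\<in>{k..<n}. f j) = (\<Sum>j\<in>{1..<n}. int j * f j)"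
proof (induction n)
  case 0 then show ?case by simp
next
  case (Suc n)
  have "(\<Sum>k\<in>{1..Suc n}. \<Sum>j\<in>{k..<Suc n}. f j) =
        (\<Sum>k\<in>{1..n}. \<Sum>j\<in>{k..<Suc n}. f j) + (\<Sum>j\<in>{Suc n..<Suc n}. f j)"
    by simp
  also have "\<dots> = (\<Sum>k\<in>{1..n}. \<Sum>j\<in>{k..<Suc n}. f j)" by simp
  also have "\<dots> = (\<Sum>k\<in>{1..n}. (\<Sum>j\<in>{k..<n}. f j) + f n)"
    by (intro sum.cong refl) (simp add: sum.atLeastLessThan_Suc)
  also have "\<dots> = (\<Sum>k\<in>{1..n}. \<Sum>j\<in>{k..<n}. f j) + int n * f n"
    by (simp add: sum.distrib)
  also have "\<dots> = (\<Sum>j\<in>{1..<Suc n}. int j * f j)"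
    using Suc by (cases n) (simp_all add: atLeastLessThanSuc)
  finally show ?case .
qed

context
  fixes N L :: nat and M :: int and a :: "nat \<Rightarrow> nat"
  assumes N2: "2 \<le> N" and L2: "2 \<le> L"
    and asum: "(\<Sum>i<N. a i) = L"
    and cong: "(\<Sum>i=1..<N. int (i * a i)) mod int N = M mod int N"
begin

definition "ww = M div (int N * int L)"
definition "ss = sres N L M"
definition "n0 = ss + int N * int L"
definition "capJ x = int L + 1 - lcol N L M a x - int L * ww"
definition "kval b = fst b + int N * (snd b - int L - 1) + M - ss"

lemma N0: "N > 0" using N2 by simp
lemma L0: "L > 0" using L2 by simp

lemma M_eq: "M = int N * int L * ww + ss"
  unfolding ww_def ss_def sres_def by simp

lemma ss_range: "0 \<le> ss" "ss < int N * int L"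
  unfolding ss_def sres_def using N0 L0 by auto

lemma sum_ja_le: "(\<Sum>j=1..<N. int (j * a j)) \<le> int (N - 1) * int L"
proof -
  have "(\<Sum>j=1..<N. int (j * a j)) \<le> (\<Sum>j=1..<N. int (N - 1) * int (a j))"
    by (intro sum_mono) (auto intro: mult_right_mono)
  also have "\<dots> = int (N - 1) * (\<Sum>j=1..<N. int (a j))" by (simp add: sum_distrib_left)
  also have "(\<Sum>j=1..<N. int (a j)) \<le> (\<Sum>j<N. int (a j))"
    by (intro sum_mono2) auto
  then have "int (N - 1) * (\<Sum>j=1..<N. int (a j)) \<le> int (N - 1) * (\<Sum>j<N. int (a j))"
    by (intro mult_left_mono) auto
  also have "(\<Sum>j<N. int (a j)) = int L" using asum by (metis of_nat_sum)
  finally show ?thesis .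
qed

lemma lN_props: "int N * lN N L M a = ss + int N * int L - (\<Sum>j=1..<N. int (j * a j))" "lN N L M a \<ge> 0"
proof -
  let ?num = "ss + int N * int L - (\<Sum>j=1..<N. int (j * a j))"
  have "ss mod int N = M mod int N"
    unfolding ss_def sres_def by (simp add: mod_mod_cancel)
  then have "ss mod int N = (\<Sum>j=1..<N. int (j * a j)) mod int N" using cong by simp
  then have "int N dvd ss - (\<Sum>j=1..<N. int (j * a j))" by (simp add: mod_eq_dvd_iff)
  then have dv: "int N dvd ?num"
    by (metis (no_types, lifting) add_diff_eq dvd_add dvd_triv_left diff_add_eq add.commute)
  have lN: "lN N L M a = ?num div int N" unfolding lN_def ss_def ..
  show "int N * lN N L M a = ?num" unfolding lN using dv by simp
  have "int (N - 1) * int L \<le> int N * int L" by (intro mult_right_mono) auto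
  then have "?num \<ge> 0" using sum_ja_le ss_range by linarith
  then show "lN N L M a \<ge> 0" unfolding lN using N0 by (intro div_int_pos_iff[THEN iffD2]) auto
qed


lemma lcol_nonneg: "lcol N L M a x \<ge> 0"
  unfolding lcol_def using lN_props(2) by (simp add: sum_nonneg)

lemma boxes_Sigma: "boxes N L M a = Sigma {1..int N} (\<lambda>x. {1..lcol N L M a x})"
  unfolding boxes_def by auto

lemma finite_boxes: "finite (boxes N L M a)"
  unfolding boxes_Sigma by auto

lemma card_boxes: "int (card (boxes N L M a)) = n0"
proof -
  have "card (boxes N L M a) = (\<Sum>x\<in>{1..int N}. card {1..lcol N L M a x})"
    unfolding boxes_Sigma by (rule card_SigmaI) auto
  then have "int (card (boxes N L M a)) = (\<Sum>x\<in>{1..int N}. lcol N L M a x)"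
    using lcol_nonneg by simp
  also have "\<dots> = (\<Sum>k\<in>{1..N}. lcol N L M a (int k))"
  proof -
    have "{1..int N} = int ` {1..N}"
    proof (rule set_eqI)
      fix x
      show "x \<in> {1..int N} \<longleftrightarrow> x \<in> int ` {1..N}"
      proof
        assume "x \<in> {1..int N}"
        then have "x = int (nat x)" "nat x \<in> {1..N}" by auto
        then show "x \<in> int ` {1..N}" by blast
      next
        assume "x \<in> int ` {1..N}"
        then show "x \<in> {1..int N}" by auto
      qed
    qed
    then show ?thesis by (simp add: sum.reindex)
  qed
  also have "\<dots> = (\<Sum>k\<in>{1..N}. lN N L M a + (\<Sum>j\<in>{k..<N}. int (a j)))"
    unfolding lcol_def by simp
  also have "\<dots> = int N * lN N L M a + (\<Sum>k\<in>{1..N}. \<Sum>j\<in>{k..<N}. int (a j))"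
    by (simp add: sum.distrib)
  also have "(\<Sum>k\<in>{1..N}. \<Sum>j\<in>{k..<N}. int (a j)) = (\<Sum>j\<in>{1..<N}. int j * int (a j))"
    by (rule double_sum)
  also have "\<dots> = (\<Sum>j=1..<N. int (j * a j))" by simp
  finally show ?thesis using lN_props(1) unfolding n0_def by simp
qed

lemma kval_order:
  assumes x: "1 \<le> x" "x \<le> int N" and x': "1 \<le> x'" "x' \<le> int N"
  shows "kval (x', y') > kval (x, y) \<longleftrightarrow> y' > y \<or> (y' = y \<and> x' > x)"
proof -
  have d: "kval (x', y') - kval (x, y) = (x' - x) + int N * (y' - y)"
    unfolding kval_def by (simp add: algebra_simps)
  consider "y' > y" | "y' < y" | "y' = y" by linarith
  then show ?thesis
  proof cases
    case 1
    then have "int N * (y' - y) \<ge> int N * 1" by (intro mult_left_mono) auto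
    then have "kval (x', y') > kval (x, y)" using d x x' by linarith
    then show ?thesis using 1 by simp
  next
    case 2
    then have "int N * (y - y') \<ge> int N * 1" by (intro mult_left_mono) auto
    then have "int N * (y' - y) \<le> - int N" by (simp add: algebra_simps)
    then have "\<not> kval (x', y') > kval (x, y)" using d x x' by linarith
    then show ?thesis using 2 by simp
  next
    case 3
    then have "kval (x', y') = kval (x, y) + (x' - x)" using d by simp
    then show ?thesis using 3 by simp
  qed
qed

lemma boxes_fst: "b \<in> boxes N L M a \<Longrightarrow> 1 \<le> fst b \<and> fst b \<le> int N"
  unfolding boxes_def by auto

lemma kval_inj:
  assumes b: "b \<in> boxes N L M a" and b': "b' \<in> boxes N L M a" and e: "kval b = kval b'"
  shows "b = b'"
proof -
  obtain x y x' y' where bb: "b = (x, y)" "b' = (x', y')" by (cases b, cases b')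
  have r: "1 \<le> x" "x \<le> int N" "1 \<le> x'" "x' \<le> int N" using boxes_fst[OF b] boxes_fst[OF b'] bb by auto
  have "\<not> kval (x', y') > kval (x, y)" "\<not> kval (x, y) > kval (x', y')" using e bb by auto
  then show ?thesis using kval_order[OF r] kval_order[OF r(3,4,1,2)] bb by auto
qed

lemma boxnum_eq:
  assumes b: "b \<in> boxes N L M a"
  shows "boxnum N L M a b = card {b' \<in> boxes N L M a. kval b' > kval b} + 1"
proof -
  let ?B = "boxes N L M a"
  have "{b' \<in> ?B. kval b' > kval b} = {b' \<in> ?B. snd b' > snd b} \<union> {b' \<in> ?B. snd b' = snd b \<and> fst b' > fst b}"
  proof -
    have "kval b' > kval b \<longleftrightarrow> snd b' > snd b \<or> (snd b' = snd b \<and> fst b' > fst b)" if "b' \<in> ?B" for b'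
    proof -
      obtain x y x' y' where bb: "b = (x, y)" "b' = (x', y')" by (cases b, cases b')
      show ?thesis using kval_order[where x=x and x'=x' and y=y and y'=y'] boxes_fst[OF b] boxes_fst[OF that] bb
        by simp
    qed
    then show ?thesis by auto
  qed
  moreover have "card ({b' \<in> ?B. snd b' > snd b} \<union> {b' \<in> ?B. snd b' = snd b \<and> fst b' > fst b}) =
      card {b' \<in> ?B. snd b' > snd b} + card {b' \<in> ?B. snd b' = snd b \<and> fst b' > fst b}"
    by (rule card_Un_disjoint) (use finite_boxes in auto)
  ultimately show ?thesis unfolding boxnum_def by simp
qed

lemma boxnum_range:
  assumes b: "b \<in> boxes N L M a"
  shows "1 \<le> boxnum N L M a b \<and> boxnum N L M a b \<le> card (boxes N L M a)"
proof -
  let ?B = "boxes N L M a"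
  have "{b' \<in> ?B. kval b' > kval b} \<subseteq> ?B - {b}" by auto
  then have "card {b' \<in> ?B. kval b' > kval b} \<le> card (?B - {b})" by (intro card_mono) (use finite_boxes in auto)
  also have "\<dots> = card ?B - 1" using b finite_boxes by simp
  finally have "card {b' \<in> ?B. kval b' > kval b} \<le> card ?B - 1" .
  moreover have "card ?B \<ge> 1" using b finite_boxes by (metis One_nat_def Suc_leI card_gt_0_iff empty_iff)
  ultimately show ?thesis using boxnum_eq[OF b] by simp
qed

lemma boxnum_strict:
  assumes b: "b \<in> boxes N L M a" and b': "b' \<in> boxes N L M a" and lt: "kval b < kval b'"
  shows "boxnum N L M a b' < boxnum N L M a b"
proof -
  let ?B = "boxes N L M a"
  have "{c \<in> ?B. kval c > kval b'} \<subset> {c \<in> ?B. kval c > kval b}"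
    using lt b' by auto
  then have "card {c \<in> ?B. kval c > kval b'} < card {c \<in> ?B. kval c > kval b}"
    by (rule psubset_card_mono[rotated]) (use finite_boxes in auto)
  then show ?thesis using boxnum_eq[OF b] boxnum_eq[OF b'] by simp
qed

lemma boxnum_inj: "inj_on (boxnum N L M a) (boxes N L M a)"
proof (rule inj_onI)
  fix b b' assume b: "b \<in> boxes N L M a" and b': "b' \<in> boxes N L M a" and e: "boxnum N L M a b = boxnum N L M a b'"
  show "b = b'"
  proof (rule ccontr)
    assume "b \<noteq> b'"
    then have "kval b \<noteq> kval b'" using kval_inj[OF b b'] by auto
    then consider "kval b < kval b'" | "kval b' < kval b" by linarith
    then show False using boxnum_strict[OF b b'] boxnum_strict[OF b' b] e by cases auto
  qed
qed

lemma boxnum_image: "boxnum N L M a ` boxes N L M a = {1..card (boxes N L M a)}"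
proof -
  let ?B = "boxes N L M a"
  have sub: "boxnum N L M a ` ?B \<subseteq> {1..card ?B}" using boxnum_range by auto
  have "card (boxnum N L M a ` ?B) = card ?B" using card_image[OF boxnum_inj] .
  then show ?thesis using sub by (intro card_subset_eq) auto
qed

lemma kseq_box:
  assumes i: "1 \<le> i" "int i \<le> n0"
  shows "\<exists>b\<in>boxes N L M a. boxnum N L M a b = i \<and> kseq N L M a i = kval b"
proof -
  let ?B = "boxes N L M a"
  have "i \<in> {1..card ?B}" using i card_boxes by simp
  then obtain b where b: "b \<in> ?B" "boxnum N L M a b = i" using boxnum_image by (metis imageE)
  have the: "(THE b. b \<in> ?B \<and> boxnum N L M a b = i) = b"
    by (rule the_equality) (use b boxnum_inj in \<open>auto simp: inj_on_def\<close>)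
  have "kseq N L M a i = kval b"
    unfolding kseq_def using i the unfolding n0_def ss_def kval_def by (simp add: Let_def)
  then show ?thesis using b by blast
qed

lemma kseq_tail: "int i > n0 \<Longrightarrow> kseq N L M a i = M - int i + 1"
  unfolding kseq_def n0_def ss_def by simp

lemma kval_kk: "kval (x, y) = kk N x (int L + 1 - y - int L * ww)"
  unfolding kval_def kk_def using M_eq by (simp add: algebra_simps)

lemma box_val_low: "b \<in> boxes N L M a \<Longrightarrow> kval b > M - n0"
proof -
  assume b: "b \<in> boxes N L M a"
  then have "1 \<le> fst b" "1 \<le> snd b" unfolding boxes_def by auto
  then have "int N * snd b \<ge> int N * 1" by (intro mult_left_mono) auto
  then show ?thesis using \<open>1 \<le> fst b\<close> unfolding kval_def n0_def by (simp add: algebra_simps)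
qed

lemma kseq_mono:
  assumes m: "1 \<le> m" and ml: "m < l"
  shows "kseq N L M a l < kseq N L M a m"
proof (cases "int l \<le> n0")
  case True
  then have "int m \<le> n0" using ml by simp
  obtain b where b: "b \<in> boxes N L M a" "boxnum N L M a b = l" "kseq N L M a l = kval b"
    using kseq_box[of l] True m ml by auto
  obtain b' where b': "b' \<in> boxes N L M a" "boxnum N L M a b' = m" "kseq N L M a m = kval b'"
    using kseq_box[of m] \<open>int m \<le> n0\<close> m by auto
  have "\<not> kval b' \<le> kval b"
  proof
    assume "kval b' \<le> kval b"
    then consider "kval b' < kval b" | "kval b' = kval b" by linarith
    then show False
    proof cases
      case 1 then show False using boxnum_strict[OF b'(1) b(1)] b b' ml by simp
    next
      case 2 then show False using kval_inj[OF b'(1) b(1)] b b' ml by simp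
    qed
  qed
  then show ?thesis using b b' by simp
next
  case False
  then have l: "kseq N L M a l = M - int l + 1" using kseq_tail by simp
  show ?thesis
  proof (cases "int m \<le> n0")
    case True
    obtain b' where b': "b' \<in> boxes N L M a" "kseq N L M a m = kval b'"
      using kseq_box[of m] True m by auto
    then show ?thesis using box_val_low[OF b'(1)] l False by simp
  next
    case F2: False
    then show ?thesis using l kseq_tail ml by simp
  qed
qed

lemma kseq_P:
  assumes i: "1 \<le> i"
  shows "kt N (kseq N L M a i) \<ge> capJ (kbar N (kseq N L M a i))"
proof (cases "int i \<le> n0")
  case True
  obtain b where b: "b \<in> boxes N L M a" "kseq N L M a i = kval b" using kseq_box[of i] True i by auto
  obtain x y where xy: "b = (x, y)" by (cases b)
  have r: "1 \<le> x" "x \<le> int N" "y \<le> lcol N L M a x" using b(1) xy unfolding boxes_def by auto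
  show ?thesis unfolding b(2) xy kval_kk using r by (simp add: kbar_kk kt_kk capJ_def)
next
  case False
  let ?k = "kseq N L M a i"
  have k: "?k = M - int i + 1" using kseq_tail False by simp
  have kb: "?k \<le> int N * int L * ww - int N * int L" using k False M_eq unfolding n0_def by simp
  have br: "1 \<le> kbar N ?k" using kbar_range[OF N0] by simp
  have dec: "?k = kbar N ?k - int N * kt N ?k" using kk_decomp[OF N0, of ?k] unfolding kk_def by simp
  have "int N * kt N ?k > int N * (int L * (1 - ww))"
    using kb br dec by (simp add: algebra_simps)
  then have "kt N ?k > int L * (1 - ww)" using N0 by (simp add: mult_less_cancel_left)
  moreover have "int L * (1 - ww) = int L - int L * ww" by (simp add: algebra_simps)
  moreover have "lcol N L M a (kbar N ?k) \<ge> 0" by (rule lcol_nonneg)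
  ultimately show ?thesis unfolding capJ_def by linarith
qed

lemma kseq_onto:
  assumes P: "kt N \<beta> \<ge> capJ (kbar N \<beta>)"
  shows "\<exists>i\<ge>1. kseq N L M a i = \<beta>"
proof -
  define b where "b = kbar N \<beta>"
  define J where "J = kt N \<beta>"
  have br: "1 \<le> b" "b \<le> int N" using kbar_range[OF N0] unfolding b_def by auto
  have dec: "\<beta> = b - int N * J" using kk_decomp[OF N0, of \<beta>] unfolding kk_def b_def J_def by simp
  have P': "J \<ge> capJ b" using P unfolding b_def J_def .
  show ?thesis
  proof (cases "J \<ge> int L + 1 - int L * ww")
    case True
    then have "int N * J \<ge> int N * (int L + 1 - int L * ww)" by (intro mult_left_mono) auto
    moreover have "int N * (int L + 1 - int L * ww) = int N * int L + int N - int N * int L * ww"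
      by (simp add: algebra_simps)
    ultimately have bb: "\<beta> \<le> int N * int L * ww - int N * int L"
      using dec br by linarith
    define i where "i = nat (M - \<beta> + 1)"
    have ii: "int i = M - \<beta> + 1" unfolding i_def using bb M_eq ss_range by simp
    have "int i > n0" using ii bb M_eq unfolding n0_def by simp
    then have "kseq N L M a i = \<beta>" using kseq_tail ii by simp
    moreover have "i \<ge> 1" using \<open>int i > n0\<close> ss_range unfolding n0_def by simp
    ultimately show ?thesis by blast
  next
    case False
    define y where "y = int L + 1 - J - int L * ww"
    have y: "1 \<le> y" "y \<le> lcol N L M a b" using False P' unfolding y_def capJ_def by simp_all
    have bx: "(b, y) \<in> boxes N L M a" unfolding boxes_def using y br by simp
    have kv: "kval (b, y) = \<beta>" unfolding kval_kk y_def kk_def using dec by simp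
    define i where "i = boxnum N L M a (b, y)"
    have ir: "1 \<le> i" "int i \<le> n0" using boxnum_range[OF bx] card_boxes unfolding i_def by auto
    obtain b' where b': "b' \<in> boxes N L M a" "boxnum N L M a b' = i" "kseq N L M a i = kval b'"
      using kseq_box[OF ir] by blast
    have "b' = (b, y)" using boxnum_inj b'(1,2) bx unfolding i_def inj_on_def by blast
    then show ?thesis using b'(3) kv ir by blast
  qed
qed

lemma capJ_mono:
  assumes x: "1 \<le> x" "x \<le> y" "y \<le> int N"
  shows "capJ x \<le> capJ y \<and> capJ y \<le> capJ x + int L"
proof -
  have sub: "{nat y..<N} \<subseteq> {nat x..<N}" using x by auto
  have un: "{nat x..<N} = {nat x..<nat y} \<union> {nat y..<N}" using x by auto
  have "(\<Sum>j\<in>{nat x..<N}. int (a j)) = (\<Sum>j\<in>{nat x..<nat y}. int (a j)) + (\<Sum>j\<in>{nat y..<N}. int (a j))"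
    unfolding un by (rule sum.union_disjoint) auto
  moreover have "(\<Sum>j\<in>{nat x..<nat y}. int (a j)) \<le> (\<Sum>j<N. int (a j))"
    by (intro sum_mono2) (use x in auto)
  moreover have "(\<Sum>j<N. int (a j)) = int L" using asum by (metis of_nat_sum)
  moreover have "(\<Sum>j\<in>{nat x..<nat y}. int (a j)) \<ge> 0" by (simp add: sum_nonneg)
  ultimately show ?thesis unfolding capJ_def lcol_def by simp
qed

end


theorem mainTheorem8:
  fixes N L :: nat and M :: int and a :: "nat \<Rightarrow> nat" and l m :: nat
  assumes "2 \<le> N" and "2 \<le> L"
    and "(\<Sum>i<N. a i) = L"
    and "(\<Sum>i=1..<N. int (i * a i)) mod int N = M mod int N"
    and "1 \<le> m" and "m < l"
  shows "\<exists>c :: int \<times> int \<Rightarrow> K. finite {p. c p \<noteq> 0} \<and>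
     (\<forall>\<alpha> \<beta>. c (\<alpha>, \<beta>) \<noteq> 0 \<longrightarrow>
        \<alpha> > \<beta> \<and> (\<exists>l'\<ge>1. \<beta> = kseq N L M a l' \<and> kseq N L M a l' \<ge> kseq N L M a l)) \<and>
     vsub (bv (kseq N L M a l, kseq N L M a m)) (lin bv c) \<in> relIm N L"
proof -
  have N0: "N > 0" and L0: "L > 0" using assms(1,2) by auto
  have l1: "1 \<le> l" using assms(5,6) by simp
  have lt: "kseq N L M a l < kseq N L M a m" by (rule kseq_mono[OF assms(1-4) assms(5,6)])
  have G: "GC N L {(\<alpha>, \<beta>). \<beta> < \<alpha> \<and> kseq N L M a l \<le> \<beta> \<and>
       kt N \<beta> \<ge> capJ N L M a (kbar N \<beta>)} (bv (kseq N L M a l, kseq N L M a m))"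
    by (rule straighten[OF N0 L0 capJ_mono[OF assms(1-4)] lt kseq_P[OF assms(1-4) l1] kseq_P[OF assms(1-4) assms(5)]])
  then obtain c where c: "fsupp c"
      "\<forall>p. c p \<noteq> 0 \<longrightarrow> p \<in> {(\<alpha>, \<beta>). \<beta> < \<alpha> \<and> kseq N L M a l \<le> \<beta> \<and> kt N \<beta> \<ge> capJ N L M a (kbar N \<beta>)}"
      "vsub (bv (kseq N L M a l, kseq N L M a m)) c \<in> W N L"
    unfolding GC_def by blast
  show ?thesis
  proof (intro exI[of _ c] conjI allI impI)
    show "finite {p. c p \<noteq> 0}" using c(1) unfolding fsupp_def .
  next
    fix \<alpha> \<beta> assume nz: "c (\<alpha>, \<beta>) \<noteq> 0"
    then have h: "\<beta> < \<alpha>" "kseq N L M a l \<le> \<beta>" "kt N \<beta> \<ge> capJ N L M a (kbar N \<beta>)" using c(2) by auto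
    show "\<alpha> > \<beta>" using h(1) .
    obtain l' where "l' \<ge> 1" "kseq N L M a l' = \<beta>" using kseq_onto[OF assms(1-4) h(3)] by blast
    then show "\<exists>l'\<ge>1. \<beta> = kseq N L M a l' \<and> kseq N L M a l' \<ge> kseq N L M a l" using h(2) by auto
  next
    show "vsub (bv (kseq N L M a l, kseq N L M a m)) (lin bv c) \<in> relIm N L"
      unfolding lin_bv_id[OF c(1)] by (rule W_relIm[OF N0 L0 c(3)])
  qed
qed

end
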